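(* Let $(X,d)$ be a path-connected metric space, $x_0\in X$, $n\geq 1$. The map $\pi:\Omega^n(X,x_0)\to\pi_n(X,x_0)$, $\pi(\alpha)=[\alpha]$, is continuous when $\pi_n(X,x_0)$ carries the topology induced by $\rho$. Consequently, the quotient topology and the $\tau$-topology on $\pi_n(X,x_0)$ are each at least as fine as the topology induced by $\rho$.
   Context: $\Omega^n(X,x_0)$ is the set of continuous maps $\alpha:[0,1]^n\to X$ with $\alpha(\partial[0,1]^n)=\{x_0\}$, with uniform metric $\mu(\alpha,\beta)=\sup_t d(\alpha(t),\beta(t))$ (equivalently the compact-open topology). $\rho(a,b)=\inf\{\mu(\alpha,\beta)\mid\alpha\in a,\beta\in b\}$ is a pseudometric on $\pi_n(X,x_0)$. The quotient topology on $\pi_n(X,x_0)$ is the finest topology making $\pi$ continuous. The $\tau$-topology is the finest group topology on $\pi_n(X,x_0)$ making $\pi$ continuous (equivalently, the finest group topology coarser than the quotient topology). *)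

theory Defs
  imports "HOL-Analysis.Analysis"
begin

text \<open>The cube [0,1]^n is modelled as cbox 0 One in real^'n, with n = CARD('n) \<ge> 1
  arbitrary; its boundary is the topological boundary in R^n.\<close>

definition cube :: "(real^'n) set" where
  "cube = cbox 0 One"

definition cube_bdry :: "(real^'n) set" where
  "cube_bdry = cbox 0 One - box 0 One"

definition Omega :: "'a::metric_space set \<Rightarrow> 'a \<Rightarrow> (real^'n \<Rightarrow> 'a) set" where
  "Omega X x0 = {\<alpha>. continuous_on cube \<alpha> \<and> \<alpha> ` cube \<subseteq> X \<and> (\<forall>t\<in>cube_bdry. \<alpha> t = x0)}"

definition mu :: "(real^'n \<Rightarrow> 'a::metric_space) \<Rightarrow> (real^'n \<Rightarrow> 'a) \<Rightarrow> real" where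
  "mu \<alpha> \<beta> = (SUP t\<in>cube. dist (\<alpha> t) (\<beta> t))"

definition Omega_top :: "'a::metric_space set \<Rightarrow> 'a \<Rightarrow> (real^'n \<Rightarrow> 'a) topology" where
  "Omega_top X x0 = topology (\<lambda>U. U \<subseteq> Omega X x0 \<and>
      (\<forall>\<alpha>\<in>U. \<exists>e>0. \<forall>\<beta>\<in>Omega X x0. mu \<alpha> \<beta> < e \<longrightarrow> \<beta> \<in> U))"

definition hclass :: "'a::metric_space set \<Rightarrow> 'a \<Rightarrow> (real^'n \<Rightarrow> 'a) \<Rightarrow> (real^'n \<Rightarrow> 'a) set" where
  "hclass X x0 \<alpha> = {\<beta> \<in> Omega X x0.
      homotopic_with_canon (\<lambda>h. \<forall>t\<in>cube_bdry. h t = x0) cube X \<alpha> \<beta>}"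

definition pin :: "'a::metric_space set \<Rightarrow> 'a \<Rightarrow> ((real^'n \<Rightarrow> 'a) set) set" where
  "pin X x0 = hclass X x0 ` Omega X x0"

definition rho :: "(real^'n \<Rightarrow> 'a::metric_space) set \<Rightarrow> (real^'n \<Rightarrow> 'a) set \<Rightarrow> real" where
  "rho a b = (INF p\<in>a \<times> b. mu (fst p) (snd p))"

definition rho_top :: "'a::metric_space set \<Rightarrow> 'a \<Rightarrow> ((real^'n \<Rightarrow> 'a) set) topology" where
  "rho_top X x0 = topology (\<lambda>U. U \<subseteq> pin X x0 \<and>
      (\<forall>a\<in>U. \<exists>e>0. \<forall>b\<in>pin X x0. rho a b < e \<longrightarrow> b \<in> U))"

definition quot_top :: "'a::metric_space set \<Rightarrow> 'a \<Rightarrow> ((real^'n \<Rightarrow> 'a) set) topology" where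
  "quot_top X x0 = topology (\<lambda>U. U \<subseteq> pin X x0 \<and>
      openin (Omega_top X x0) {\<alpha> \<in> Omega X x0. hclass X x0 \<alpha> \<in> U})"

definition coord0 :: "'n::finite" where
  "coord0 = (SOME k. True)"

definition concat :: "(real^'n::finite \<Rightarrow> 'a) \<Rightarrow> (real^'n \<Rightarrow> 'a) \<Rightarrow> (real^'n \<Rightarrow> 'a)" where
  "concat \<alpha> \<beta> = (\<lambda>t. if t $ coord0 \<le> 1/2
       then \<alpha> (\<chi> i. if i = coord0 then 2 * t $ i else t $ i)
       else \<beta> (\<chi> i. if i = coord0 then 2 * t $ i - 1 else t $ i))"

definition reverse :: "(real^'n::finite \<Rightarrow> 'a) \<Rightarrow> (real^'n \<Rightarrow> 'a)" where
  "reverse \<alpha> = (\<lambda>t. \<alpha> (\<chi> i. if i = coord0 then 1 - t $ i else t $ i))"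

definition pin_mult :: "'a::metric_space set \<Rightarrow> 'a \<Rightarrow> (real^'n::finite \<Rightarrow> 'a) set \<Rightarrow> (real^'n \<Rightarrow> 'a) set \<Rightarrow> (real^'n \<Rightarrow> 'a) set" where
  "pin_mult X x0 a b = hclass X x0 (concat (SOME \<alpha>. \<alpha> \<in> a) (SOME \<beta>. \<beta> \<in> b))"

definition pin_inv :: "'a::metric_space set \<Rightarrow> 'a \<Rightarrow> (real^'n::finite \<Rightarrow> 'a) set \<Rightarrow> (real^'n \<Rightarrow> 'a) set" where
  "pin_inv X x0 a = hclass X x0 (reverse (SOME \<alpha>. \<alpha> \<in> a))"

definition group_topology_pin :: "'a::metric_space set \<Rightarrow> 'a \<Rightarrow> ((real^'n::finite \<Rightarrow> 'a) set) topology \<Rightarrow> bool" where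
  "group_topology_pin X x0 T \<longleftrightarrow> topspace T = pin X x0 \<and>
     continuous_map (prod_topology T T) T (\<lambda>(a,b). pin_mult X x0 a b) \<and>
     continuous_map T T (pin_inv X x0)"

text \<open>tau-topology: finest group topology on pi_n making pi continuous
  (the join of all such group topologies).\<close>
definition tau_top :: "'a::metric_space set \<Rightarrow> 'a \<Rightarrow> ((real^'n::finite \<Rightarrow> 'a) set) topology" where
  "tau_top X x0 = topology_generated_by
     (\<Union>{{U. openin T U} | T. group_topology_pin X x0 T \<and>
          continuous_map (Omega_top X x0) T (hclass X x0)})"

end

theory Submission
  imports Defs
begin

abbreviation HP :: "'a \<Rightarrow> (real^'n::finite \<Rightarrow> 'a) \<Rightarrow> bool" where
  "HP x0 \<equiv> (\<lambda>h. \<forall>t\<in>cube_bdry. h t = x0)"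

definition sk :: "real^'n::finite \<Rightarrow> real \<Rightarrow> real^'n" where
  "sk t x = (\<chi> i. if i = coord0 then x else t $ i)"

definition sideb :: "real^'n::finite \<Rightarrow> bool" where
  "sideb t = (\<exists>i. i \<noteq> coord0 \<and> (t $ i = 0 \<or> t $ i = 1))"

lemma sk_k [simp]: "sk t x $ coord0 = x" by (simp add: sk_def)
lemma sk_i [simp]: "i \<noteq> coord0 \<Longrightarrow> sk t x $ i = t $ i" by (simp add: sk_def)
lemma sideb_sk [simp]: "sideb (sk t x) = sideb t" by (auto simp: sideb_def)
lemma sk_self: "sk t (t $ coord0) = t" by (simp add: sk_def vec_eq_iff)
lemma sk_sk [simp]: "sk (sk t x) y = sk t y" by (simp add: sk_def vec_eq_iff)

lemma one_nth [simp]: "(One::real^'n::finite) $ i = 1"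
  by (metis Cart_1 one_index)

lemma cube_iff: "t \<in> cube \<longleftrightarrow> (\<forall>i. 0 \<le> t $ i \<and> t $ i \<le> 1)"
  unfolding cube_def mem_box_cart(2) one_nth zero_index by (rule refl)

lemma box_iff: "t \<in> box 0 One \<longleftrightarrow> (\<forall>i. 0 < t $ i \<and> t $ i < (1::real))"
  unfolding mem_box_cart(1) one_nth zero_index by (rule refl)

lemma bdry_iff0: "t \<in> cube_bdry \<longleftrightarrow> t \<in> cube \<and> (\<exists>i. t $ i = 0 \<or> t $ i = 1)"
proof
  assume t: "t \<in> cube_bdry"
  then have c: "t \<in> cube" and nb: "t \<notin> box 0 One" unfolding cube_bdry_def cube_def by auto
  from nb obtain i where "\<not> (0 < t $ i \<and> t $ i < 1)" unfolding box_iff by blast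
  moreover have "0 \<le> t $ i" "t $ i \<le> 1" using c unfolding cube_iff by auto
  ultimately have "t $ i = 0 \<or> t $ i = 1" by linarith
  then show "t \<in> cube \<and> (\<exists>i. t $ i = 0 \<or> t $ i = 1)" using c by blast
next
  assume "t \<in> cube \<and> (\<exists>i. t $ i = 0 \<or> t $ i = 1)"
  then obtain i where c: "t \<in> cube" and i: "t $ i = 0 \<or> t $ i = 1" by blast
  then have "\<not> (0 < t $ i \<and> t $ i < 1)" by auto
  then have "t \<notin> box 0 One" unfolding box_iff by blast
  then show "t \<in> cube_bdry" using c unfolding cube_bdry_def cube_def by auto
qed

lemma bdry_iff: "t \<in> cube_bdry \<longleftrightarrow> t \<in> cube \<and> (t $ coord0 = 0 \<or> t $ coord0 = 1 \<or> sideb t)"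
proof -
  have "(\<exists>i. t $ i = 0 \<or> t $ i = 1) \<longleftrightarrow> (t $ coord0 = 0 \<or> t $ coord0 = 1 \<or> sideb t)"
  proof
    assume "\<exists>i. t $ i = 0 \<or> t $ i = 1"
    then obtain i where i: "t $ i = 0 \<or> t $ i = 1" by blast
    show "t $ coord0 = 0 \<or> t $ coord0 = 1 \<or> sideb t"
    proof (cases "i = coord0")
      case True
      then have "t $ coord0 = 0 \<or> t $ coord0 = 1" using i by simp
      then show ?thesis by blast
    next
      case False then show ?thesis using i unfolding sideb_def by blast
    qed
  next
    assume "t $ coord0 = 0 \<or> t $ coord0 = 1 \<or> sideb t"
    then show "\<exists>i. t $ i = 0 \<or> t $ i = 1" unfolding sideb_def by blast
  qed
  then show ?thesis unfolding bdry_iff0 by simp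
qed

lemma bdry_sub: "cube_bdry \<subseteq> cube" by (auto simp: bdry_iff)

lemma sk_cube: "t \<in> cube \<Longrightarrow> 0 \<le> x \<Longrightarrow> x \<le> 1 \<Longrightarrow> sk t x \<in> cube"
  by (simp add: cube_iff sk_def)

lemma sk_bdry: "t \<in> cube \<Longrightarrow> x = 0 \<or> x = 1 \<Longrightarrow> sk t x \<in> cube_bdry"
  by (auto simp: bdry_iff sk_cube)

lemma sk_side: "t \<in> cube \<Longrightarrow> 0 \<le> x \<Longrightarrow> x \<le> 1 \<Longrightarrow> sideb t \<Longrightarrow> sk t x \<in> cube_bdry"
  by (auto simp: bdry_iff sk_cube)

lemma cont_sk [continuous_intros]:
  "continuous_on S f \<Longrightarrow> continuous_on S g \<Longrightarrow> continuous_on S (\<lambda>p. sk (f p) (g p))"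
  unfolding sk_def
  apply (intro continuous_on_vec_lambda)
  subgoal for i by (cases "i = coord0") (auto intro: continuous_intros)
  done

lemma zero_cube: "0 \<in> cube" by (simp add: cube_iff)

lemma Omega_iff: "\<alpha> \<in> Omega X x0 \<longleftrightarrow> continuous_on cube \<alpha> \<and> \<alpha> ` cube \<subseteq> X \<and> (\<forall>t\<in>cube_bdry. \<alpha> t = x0)"
  by (simp add: Omega_def)

lemma hom_raw:
  fixes f g :: "real^'n::finite \<Rightarrow> 'a::metric_space"
  shows "homotopic_with_canon (HP x0) cube X f g \<longleftrightarrow>
           (\<exists>h. continuous_map (prod_topology (subtopology euclideanreal {0..1}) (top_of_set cube)) (top_of_set X) h \<and>
              (\<forall>x \<in> topspace (top_of_set cube). h(0,x) = f x) \<and>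
              (\<forall>x \<in> topspace (top_of_set cube). h(1,x) = g x) \<and>
              (\<forall>t \<in> {0..1}. HP x0 (\<lambda>x. h(t, x))))"
  proof (rule homotopic_with)
    fix h k :: "real^'n \<Rightarrow> 'a"
    assume "\<And>x. x \<in> topspace (top_of_set cube) \<Longrightarrow> h x = k x"
    then have "\<forall>t\<in>cube_bdry. h t = k t" using bdry_sub by auto
    then show "HP x0 h = HP x0 k" by auto
  qed

lemma hom_intro:
  fixes f g :: "real^'n::finite \<Rightarrow> 'a::metric_space" and h :: "real \<times> (real^'n) \<Rightarrow> 'a"
  assumes "continuous_on ({0..1} \<times> cube) h" "h ` ({0..1} \<times> cube) \<subseteq> X"
      "\<And>t. t\<in>cube \<Longrightarrow> h (0, t) = f t" "\<And>t. t\<in>cube \<Longrightarrow> h (1, t) = g t"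
      "\<And>s t. s\<in>{0..1} \<Longrightarrow> t\<in>cube_bdry \<Longrightarrow> h (s, t) = x0"
  shows "homotopic_with_canon (HP x0) cube X f g"
  unfolding hom_raw
  apply (rule exI[of _ h])
  using assms by (auto simp: image_subset_iff_funcset)

lemma hom_ex:
  fixes f g :: "real^'n::finite \<Rightarrow> 'a::metric_space"
  assumes "homotopic_with_canon (HP x0) cube X f g"
  shows "\<exists>h :: real \<times> (real^'n) \<Rightarrow> 'a. continuous_on ({0..1} \<times> cube) h \<and> h ` ({0..1} \<times> cube) \<subseteq> X \<and>
      (\<forall>t\<in>cube. h (0, t) = f t) \<and> (\<forall>t\<in>cube. h (1, t) = g t) \<and>
      (\<forall>s\<in>{0..1}. \<forall>t\<in>cube_bdry. h (s, t) = x0)"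
  using assms unfolding hom_raw by (auto simp: image_subset_iff_funcset)

definition cat :: "(real^'n::finite \<Rightarrow> 'a) \<Rightarrow> (real^'n \<Rightarrow> 'a) \<Rightarrow> real^'n \<Rightarrow> 'a" where
  "cat f g t = (if t $ coord0 \<le> 1/2 then f (sk t (2 * t $ coord0)) else g (sk t (2 * t $ coord0 - 1)))"

definition tri :: "(real^'n::finite \<Rightarrow> 'a) \<Rightarrow> (real^'n \<Rightarrow> 'a) \<Rightarrow> (real^'n \<Rightarrow> 'a) \<Rightarrow> real^'n \<Rightarrow> 'a" where
  "tri f g h t = (if t $ coord0 \<le> 1/3 then f (sk t (3 * t $ coord0))
      else if t $ coord0 \<le> 2/3 then g (sk t (3 * t $ coord0 - 1)) else h (sk t (3 * t $ coord0 - 2)))"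

definition lrev :: "(real^'n::finite \<Rightarrow> 'a) \<Rightarrow> real^'n \<Rightarrow> 'a" where
  "lrev f t = f (sk t (1 - t $ coord0))"

lemma concat_cat:
  fixes f g :: "real^'n::finite \<Rightarrow> 'a"
  shows "concat f g = cat f g"
proof (rule ext)
  fix t :: "real^'n"
  have 1: "(\<chi> i. if i = coord0 then 2 * t $ i else t $ i) = sk t (2 * t $ coord0)"
    by (simp add: sk_def vec_eq_iff)
  have 2: "(\<chi> i. if i = coord0 then 2 * t $ i - 1 else t $ i) = sk t (2 * t $ coord0 - 1)"
    by (simp add: sk_def vec_eq_iff)
  show "concat f g t = cat f g t" unfolding concat_def cat_def 1 2 ..
qed

lemma reverse_rev:
  fixes f :: "real^'n::finite \<Rightarrow> 'a"
  shows "reverse f = lrev f"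
proof (rule ext)
  fix t :: "real^'n"
  have 1: "(\<chi> i. if i = coord0 then 1 - t $ i else t $ i) = sk t (1 - t $ coord0)"
    by (simp add: sk_def vec_eq_iff)
  show "reverse f t = lrev f t" unfolding reverse_def lrev_def 1 ..
qed

lemma piece_cont:
  fixes F :: "real \<Rightarrow> real^'n::finite \<Rightarrow> 'a::metric_space"
  assumes F: "continuous_on ({0..1} \<times> cube) (\<lambda>p. F (fst p) (snd p))"
    and c: "continuous_on D c" and D: "\<And>p. p \<in> D \<Longrightarrow> fst p \<in> {0..1} \<and> snd p \<in> cube \<and> 0 \<le> c p \<and> c p \<le> 1"
  shows "continuous_on D (\<lambda>p. F (fst p) (sk (snd p) (c p)))"
proof -
  have "continuous_on D ((\<lambda>p. F (fst p) (snd p)) \<circ> (\<lambda>p. (fst p, sk (snd p) (c p))))"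
  proof (rule continuous_on_compose)
    show "continuous_on D (\<lambda>p. (fst p, sk (snd p) (c p)))"
      by (intro continuous_intros c)
    show "continuous_on ((\<lambda>p. (fst p, sk (snd p) (c p))) ` D) (\<lambda>p. F (fst p) (snd p))"
      by (rule continuous_on_subset[OF F]) (use D sk_cube in fastforce)
  qed
  then show ?thesis by (simp add: o_def)
qed

lemma beta_cont:
  fixes \<beta> :: "real^'n::finite \<Rightarrow> 'a::metric_space" and D :: "(real \<times> (real^'n)) set"
  assumes b: "continuous_on cube \<beta>"
    and c: "continuous_on D c" and D: "\<And>p. p \<in> D \<Longrightarrow> fst p \<in> {0..1} \<and> snd p \<in> cube \<and> 0 \<le> c p \<and> c p \<le> 1"
  shows "continuous_on D (\<lambda>p. \<beta> (sk (snd p) (c p)))"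
proof -
  have "continuous_on ({0..1} \<times> cube) (\<lambda>p. \<beta> (snd p))"
    by (rule continuous_on_compose2[OF b continuous_on_snd[OF continuous_on_id]]) auto
  from piece_cont[of "\<lambda>s. \<beta>", OF this c D] show ?thesis by simp
qed

lemma tri_family:
  fixes F G K :: "real \<Rightarrow> real^'n::finite \<Rightarrow> 'a::metric_space"
  assumes cF: "continuous_on ({0..1} \<times> cube) (\<lambda>p. F (fst p) (snd p))"
    and cG: "continuous_on ({0..1} \<times> cube) (\<lambda>p. G (fst p) (snd p))"
    and cK: "continuous_on ({0..1} \<times> cube) (\<lambda>p. K (fst p) (snd p))"
    and m1: "\<And>s t. s \<in> {0..1} \<Longrightarrow> t \<in> cube \<Longrightarrow> F s (sk t 1) = G s (sk t 0)"
    and m2: "\<And>s t. s \<in> {0..1} \<Longrightarrow> t \<in> cube \<Longrightarrow> G s (sk t 1) = K s (sk t 0)"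
  shows "continuous_on ({0..1} \<times> cube) (\<lambda>p. tri (F (fst p)) (G (fst p)) (K (fst p)) (snd p))"
  unfolding tri_def
proof (rule continuous_on_cases_le[where h="\<lambda>p. snd p $ coord0"])
  show "continuous_on {x \<in> {0..1} \<times> cube. snd x $ coord0 \<le> 1 / 3}
     (\<lambda>p. F (fst p) (sk (snd p) (3 * snd p $ coord0)))"
    by (rule piece_cont[OF cF]) (auto intro!: continuous_intros simp: cube_iff)
  show "continuous_on ({0..1} \<times> cube) (\<lambda>p. snd p $ coord0)"
    by (intro continuous_intros)
  show "F (fst p) (sk (snd p) (3 * snd p $ coord0)) =
         (if snd p $ coord0 \<le> 2 / 3 then G (fst p) (sk (snd p) (3 * snd p $ coord0 - 1))
          else K (fst p) (sk (snd p) (3 * snd p $ coord0 - 2)))"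
    if "p \<in> {0..1} \<times> cube" "snd p $ coord0 = 1 / 3" for p
  proof -
    have "3 * snd p $ coord0 = 1" "3 * snd p $ coord0 - 1 = 0" using that(2) by auto
    then show ?thesis using that(1) m1[of "fst p" "snd p"] by (auto simp: mem_Times_iff)
  qed
  show "continuous_on {x \<in> {0..1} \<times> cube. 1 / 3 \<le> snd x $ coord0}
     (\<lambda>p. if snd p $ coord0 \<le> 2 / 3 then G (fst p) (sk (snd p) (3 * snd p $ coord0 - 1))
          else K (fst p) (sk (snd p) (3 * snd p $ coord0 - 2)))"
  proof (rule continuous_on_cases_le[where h="\<lambda>p. snd p $ coord0"])
    show "continuous_on {x \<in> {x \<in> {0..1} \<times> cube. 1 / 3 \<le> snd x $ coord0}. snd x $ coord0 \<le> 2 / 3}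
       (\<lambda>p. G (fst p) (sk (snd p) (3 * snd p $ coord0 - 1)))"
      by (rule piece_cont[OF cG]) (auto intro!: continuous_intros simp: cube_iff)
    show "continuous_on {x \<in> {x \<in> {0..1} \<times> cube. 1 / 3 \<le> snd x $ coord0}. 2 / 3 \<le> snd x $ coord0}
       (\<lambda>p. K (fst p) (sk (snd p) (3 * snd p $ coord0 - 2)))"
      by (rule piece_cont[OF cK]) (auto intro!: continuous_intros simp: cube_iff)
    show "continuous_on {x \<in> {0..1} \<times> cube. 1 / 3 \<le> snd x $ coord0} (\<lambda>p. snd p $ coord0)"
      by (intro continuous_intros)
    show "G (fst p) (sk (snd p) (3 * snd p $ coord0 - 1)) = K (fst p) (sk (snd p) (3 * snd p $ coord0 - 2))"
      if "p \<in> {x \<in> {0..1} \<times> cube. 1 / 3 \<le> snd x $ coord0}" "snd p $ coord0 = 2 / 3" for p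
    proof -
      have "3 * snd p $ coord0 - 1 = 1" "3 * snd p $ coord0 - 2 = 0" using that(2) by auto
      then show ?thesis using that(1) m2[of "fst p" "snd p"] by (auto simp: mem_Times_iff)
    qed
  qed
qed

lemma cat_family:
  fixes F G :: "real \<Rightarrow> real^'n::finite \<Rightarrow> 'a::metric_space"
  assumes cF: "continuous_on ({0..1} \<times> cube) (\<lambda>p. F (fst p) (snd p))"
    and cG: "continuous_on ({0..1} \<times> cube) (\<lambda>p. G (fst p) (snd p))"
    and m1: "\<And>s t. s \<in> {0..1} \<Longrightarrow> t \<in> cube \<Longrightarrow> F s (sk t 1) = G s (sk t 0)"
  shows "continuous_on ({0..1} \<times> cube) (\<lambda>p. cat (F (fst p)) (G (fst p)) (snd p))"
  unfolding cat_def
proof (rule continuous_on_cases_le[where h="\<lambda>p. snd p $ coord0"])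
  show "continuous_on {x \<in> {0..1} \<times> cube. snd x $ coord0 \<le> 1 / 2}
     (\<lambda>p. F (fst p) (sk (snd p) (2 * snd p $ coord0)))"
    by (rule piece_cont[OF cF]) (auto intro!: continuous_intros simp: cube_iff)
  show "continuous_on {x \<in> {0..1} \<times> cube. 1 / 2 \<le> snd x $ coord0}
     (\<lambda>p. G (fst p) (sk (snd p) (2 * snd p $ coord0 - 1)))"
    by (rule piece_cont[OF cG]) (auto intro!: continuous_intros simp: cube_iff)
  show "continuous_on ({0..1} \<times> cube) (\<lambda>p. snd p $ coord0)"
    by (intro continuous_intros)
  show "F (fst p) (sk (snd p) (2 * snd p $ coord0)) = G (fst p) (sk (snd p) (2 * snd p $ coord0 - 1))"
    if "p \<in> {0..1} \<times> cube" "snd p $ coord0 = 1 / 2" for p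
  proof -
    have "2 * snd p $ coord0 = 1" "2 * snd p $ coord0 - 1 = 0" using that(2) by auto
    then show ?thesis using that(1) m1[of "fst p" "snd p"] by (auto simp: mem_Times_iff)
  qed
qed

lemma tri_prop:
  assumes "\<And>c. 0 \<le> c \<Longrightarrow> c \<le> 1 \<Longrightarrow> Q (f (sk t c))" "\<And>c. 0 \<le> c \<Longrightarrow> c \<le> 1 \<Longrightarrow> Q (g (sk t c))"
    "\<And>c. 0 \<le> c \<Longrightarrow> c \<le> 1 \<Longrightarrow> Q (h (sk t c))" "t \<in> cube"
  shows "Q (tri f g h t)"
proof -
  have k: "0 \<le> t $ coord0" "t $ coord0 \<le> 1" using assms(4) by (auto simp: cube_iff)
  show ?thesis unfolding tri_def
    using assms(1)[of "3*t$coord0"] assms(2)[of "3*t$coord0 - 1"] assms(3)[of "3*t$coord0 - 2"] k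
    by (cases "t $ coord0 \<le> 1/3"; cases "t $ coord0 \<le> 2/3") simp_all
qed

lemma cat_prop:
  assumes "\<And>c. 0 \<le> c \<Longrightarrow> c \<le> 1 \<Longrightarrow> Q (f (sk t c))" "\<And>c. 0 \<le> c \<Longrightarrow> c \<le> 1 \<Longrightarrow> Q (g (sk t c))"
    "t \<in> cube"
  shows "Q (cat f g t)"
proof -
  have k: "0 \<le> t $ coord0" "t $ coord0 \<le> 1" using assms(3) by (auto simp: cube_iff)
  show ?thesis
  proof (cases "t $ coord0 \<le> 1/2")
    case True
    have "Q (f (sk t (2*t$coord0)))" apply (rule assms(1)) using k True by auto
    then show ?thesis using True by (simp add: cat_def)
  next
    case False
    have "Q (g (sk t (2*t$coord0 - 1)))" apply (rule assms(2)) using k False by auto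
    then show ?thesis using False by (simp add: cat_def)
  qed
qed


lemma tri_cong:
  assumes "\<And>u. u \<in> cube \<Longrightarrow> f u = f' u" "\<And>u. u \<in> cube \<Longrightarrow> g u = g' u"
    "\<And>u. u \<in> cube \<Longrightarrow> h u = h' u" "t \<in> cube"
  shows "tri f g h t = tri f' g' h' t"
proof -
  have k: "0 \<le> t $ coord0" "t $ coord0 \<le> 1" using assms(4) by (auto simp: cube_iff)
  show ?thesis
  proof (cases "t $ coord0 \<le> 1/3")
    case True
    then show ?thesis using k assms(1)[OF sk_cube[OF assms(4), of "3 * t$coord0"]] by (simp add: tri_def)
  next
    case False
    show ?thesis
    proof (cases "t $ coord0 \<le> 2/3")
      case True
      then show ?thesis using k False assms(2)[OF sk_cube[OF assms(4), of "3 * t$coord0 - 1"]] by (simp add: tri_def)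
    next
      case F2: False
      then show ?thesis using k False assms(3)[OF sk_cube[OF assms(4), of "3 * t$coord0 - 2"]] by (simp add: tri_def)
    qed
  qed
qed

lemma cat_cong:
  assumes "\<And>u. u \<in> cube \<Longrightarrow> f u = f' u" "\<And>u. u \<in> cube \<Longrightarrow> g u = g' u" "t \<in> cube"
  shows "cat f g t = cat f' g' t"
proof -
  have k: "0 \<le> t $ coord0" "t $ coord0 \<le> 1" using assms(3) by (auto simp: cube_iff)
  show ?thesis
  proof (cases "t $ coord0 \<le> 1/2")
    case True
    then show ?thesis using k assms(1)[OF sk_cube[OF assms(3), of "2 * t$coord0"]] by (simp add: cat_def)
  next
    case False
    then show ?thesis using k assms(2)[OF sk_cube[OF assms(3), of "2 * t$coord0 - 1"]] by (simp add: cat_def)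
  qed
qed

lemma tri_dist:
  assumes "\<And>u. u \<in> cube \<Longrightarrow> dist (f u) (f' u) \<le> c" "\<And>u. u \<in> cube \<Longrightarrow> dist (g u) (g' u) \<le> c"
    "\<And>u. u \<in> cube \<Longrightarrow> dist (h u) (h' u) \<le> c" "t \<in> cube"
  shows "dist (tri f g h t) (tri f' g' h' t) \<le> c"
proof -
  have k: "0 \<le> t $ coord0" "t $ coord0 \<le> 1" using assms(4) by (auto simp: cube_iff)
  show ?thesis
  proof (cases "t $ coord0 \<le> 1/3")
    case True
    then show ?thesis using k assms(1)[OF sk_cube[OF assms(4), of "3 * t$coord0"]] by (simp add: tri_def)
  next
    case False
    show ?thesis
    proof (cases "t $ coord0 \<le> 2/3")
      case True
      then show ?thesis using k False assms(2)[OF sk_cube[OF assms(4), of "3 * t$coord0 - 1"]] by (simp add: tri_def)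
    next
      case F2: False
      then show ?thesis using k False assms(3)[OF sk_cube[OF assms(4), of "3 * t$coord0 - 2"]] by (simp add: tri_def)
    qed
  qed
qed

lemma cat_dist:
  assumes "\<And>u. u \<in> cube \<Longrightarrow> dist (f u) (f' u) \<le> c" "\<And>u. u \<in> cube \<Longrightarrow> dist (g u) (g' u) \<le> c" "t \<in> cube"
  shows "dist (cat f g t) (cat f' g' t) \<le> c"
proof -
  have k: "0 \<le> t $ coord0" "t $ coord0 \<le> 1" using assms(3) by (auto simp: cube_iff)
  show ?thesis
  proof (cases "t $ coord0 \<le> 1/2")
    case True
    then show ?thesis using k assms(1)[OF sk_cube[OF assms(3), of "2 * t$coord0"]] by (simp add: cat_def)
  next
    case False
    then show ?thesis using k assms(2)[OF sk_cube[OF assms(3), of "2 * t$coord0 - 1"]] by (simp add: cat_def)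
  qed
qed

lemma Omega_cont: "\<alpha> \<in> Omega X x0 \<Longrightarrow> continuous_on cube \<alpha>"
  by (simp add: Omega_def)
lemma Omega_in: "\<alpha> \<in> Omega X x0 \<Longrightarrow> t \<in> cube \<Longrightarrow> \<alpha> t \<in> X"
  by (auto simp: Omega_def)
lemma Omega_bd: "\<alpha> \<in> Omega X x0 \<Longrightarrow> t \<in> cube_bdry \<Longrightarrow> \<alpha> t = x0"
  by (auto simp: Omega_def)

lemma hom_Omega:
  fixes f g :: "real^'n::finite \<Rightarrow> 'a::metric_space"
  assumes "homotopic_with_canon (HP x0) cube X f g"
  shows "f \<in> Omega X x0" "g \<in> Omega X x0"
  using homotopic_with_imp_continuous[OF assms] homotopic_with_imp_subset1[OF assms]
    homotopic_with_imp_subset2[OF assms] homotopic_with_imp_property[OF assms]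
  by (auto simp: Omega_def)

lemma hom_refl:
  fixes f :: "real^'n::finite \<Rightarrow> 'a::metric_space"
  shows "f \<in> Omega X x0 \<Longrightarrow> homotopic_with_canon (HP x0) cube X f f"
  by (auto simp: Omega_def image_subset_iff_funcset)

lemma hom_sym:
  fixes f g :: "real^'n::finite \<Rightarrow> 'a::metric_space"
  shows "homotopic_with_canon (HP x0) cube X f g \<Longrightarrow> homotopic_with_canon (HP x0) cube X g f"
  by (rule homotopic_with_symD)

lemma hom_trans:
  fixes f g h :: "real^'n::finite \<Rightarrow> 'a::metric_space"
  shows "homotopic_with_canon (HP x0) cube X f g \<Longrightarrow> homotopic_with_canon (HP x0) cube X g h
    \<Longrightarrow> homotopic_with_canon (HP x0) cube X f h"
  by (rule homotopic_with_trans)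

lemma hom_eq:
  fixes f g f' g' :: "real^'n::finite \<Rightarrow> 'a::metric_space"
  assumes "homotopic_with_canon (HP x0) cube X f g"
    "\<And>t. t \<in> cube \<Longrightarrow> f' t = f t" "\<And>t. t \<in> cube \<Longrightarrow> g' t = g t"
  shows "homotopic_with_canon (HP x0) cube X f' g'"
proof (rule homotopic_with_eq[OF assms(1)])
  show "f' x = f x" if "x \<in> topspace (top_of_set cube)" for x using that assms(2) by simp
  show "g' x = g x" if "x \<in> topspace (top_of_set cube)" for x using that assms(3) by simp
  fix h k :: "real^'n \<Rightarrow> 'a"
  assume "\<And>x. x \<in> topspace (top_of_set cube) \<Longrightarrow> h x = k x"
  then have "\<forall>t\<in>cube_bdry. h t = k t" using bdry_sub by auto
  then show "HP x0 h = HP x0 k" by auto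
qed

lemma const_fam:
  fixes \<alpha> :: "real^'n::finite \<Rightarrow> 'a::metric_space"
  shows "continuous_on cube \<alpha> \<Longrightarrow> continuous_on ({0..1} \<times> cube) (\<lambda>p. \<alpha> (snd p))"
  by (rule continuous_on_compose2[of cube \<alpha> _ snd]) (auto intro: continuous_intros)

lemma tri_hom:
  fixes F G K :: "real \<Rightarrow> real^'n::finite \<Rightarrow> 'a::metric_space"
  assumes cF: "continuous_on ({0..1} \<times> cube) (\<lambda>p. F (fst p) (snd p))"
    and cG: "continuous_on ({0..1} \<times> cube) (\<lambda>p. G (fst p) (snd p))"
    and cK: "continuous_on ({0..1} \<times> cube) (\<lambda>p. K (fst p) (snd p))"
    and inX: "\<And>s u. s \<in> {0..1} \<Longrightarrow> u \<in> cube \<Longrightarrow> F s u \<in> X \<and> G s u \<in> X \<and> K s u \<in> X"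
    and m1: "\<And>s t. s \<in> {0..1} \<Longrightarrow> t \<in> cube \<Longrightarrow> F s (sk t 1) = G s (sk t 0)"
    and m2: "\<And>s t. s \<in> {0..1} \<Longrightarrow> t \<in> cube \<Longrightarrow> G s (sk t 1) = K s (sk t 0)"
    and b0: "\<And>s t. s \<in> {0..1} \<Longrightarrow> t \<in> cube \<Longrightarrow> F s (sk t 0) = x0"
    and b1: "\<And>s t. s \<in> {0..1} \<Longrightarrow> t \<in> cube \<Longrightarrow> K s (sk t 1) = x0"
    and sd: "\<And>s u. s \<in> {0..1} \<Longrightarrow> u \<in> cube \<Longrightarrow> sideb u \<Longrightarrow> F s u = x0 \<and> G s u = x0 \<and> K s u = x0"
  shows "homotopic_with_canon (HP x0) cube X (tri (F 0) (G 0) (K 0)) (tri (F 1) (G 1) (K 1))"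
proof (rule hom_intro[where h = "\<lambda>p. tri (F (fst p)) (G (fst p)) (K (fst p)) (snd p)"])
  show "continuous_on ({0..1} \<times> cube) (\<lambda>p. tri (F (fst p)) (G (fst p)) (K (fst p)) (snd p))"
    by (rule tri_family[OF cF cG cK m1 m2])
  show "(\<lambda>p. tri (F (fst p)) (G (fst p)) (K (fst p)) (snd p)) ` ({0..1} \<times> cube) \<subseteq> X"
  proof clarsimp
    fix s and t :: "real^'n" assume st: "0 \<le> s" "s \<le> (1::real)" "t \<in> cube"
    show "tri (F s) (G s) (K s) t \<in> X"
      by (rule tri_prop[where Q = "\<lambda>y. y \<in> X"]) (use inX sk_cube st in auto)
  qed
  show "tri (F (fst (0::real, t))) (G (fst (0::real, t))) (K (fst (0::real, t))) (snd (0::real, t)) = tri (F 0) (G 0) (K 0) t" for t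
    by simp
  show "tri (F (fst (1::real, t))) (G (fst (1::real, t))) (K (fst (1::real, t))) (snd (1::real, t)) = tri (F 1) (G 1) (K 1) t" for t
    by simp
  show "tri (F (fst (s, t))) (G (fst (s, t))) (K (fst (s, t))) (snd (s, t)) = x0"
    if s: "s \<in> {0..1}" and t: "t \<in> cube_bdry" for s t
  proof -
    have tc: "t \<in> cube" and tb: "t $ coord0 = 0 \<or> t $ coord0 = 1 \<or> sideb t" using t by (auto simp: bdry_iff)
    consider "t $ coord0 = 0" | "t $ coord0 = 1" | "sideb t" using tb by blast
    then show ?thesis
    proof cases
      case 1
      then show ?thesis using b0[OF s tc] by (simp add: tri_def)
    next
      case 2
      then show ?thesis using b1[OF s tc] by (simp add: tri_def)
    next
      case 3
      show ?thesis
        by simp (rule tri_prop[where Q = "\<lambda>y. y = x0"], (use sd[OF s] sk_cube[OF tc] 3 tc in auto))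
    qed
  qed
qed

lemma cat_hom:
  fixes F G :: "real \<Rightarrow> real^'n::finite \<Rightarrow> 'a::metric_space"
  assumes cF: "continuous_on ({0..1} \<times> cube) (\<lambda>p. F (fst p) (snd p))"
    and cG: "continuous_on ({0..1} \<times> cube) (\<lambda>p. G (fst p) (snd p))"
    and inX: "\<And>s u. s \<in> {0..1} \<Longrightarrow> u \<in> cube \<Longrightarrow> F s u \<in> X \<and> G s u \<in> X"
    and m1: "\<And>s t. s \<in> {0..1} \<Longrightarrow> t \<in> cube \<Longrightarrow> F s (sk t 1) = G s (sk t 0)"
    and b0: "\<And>s t. s \<in> {0..1} \<Longrightarrow> t \<in> cube \<Longrightarrow> F s (sk t 0) = x0"
    and b1: "\<And>s t. s \<in> {0..1} \<Longrightarrow> t \<in> cube \<Longrightarrow> G s (sk t 1) = x0"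
    and sd: "\<And>s u. s \<in> {0..1} \<Longrightarrow> u \<in> cube \<Longrightarrow> sideb u \<Longrightarrow> F s u = x0 \<and> G s u = x0"
  shows "homotopic_with_canon (HP x0) cube X (cat (F 0) (G 0)) (cat (F 1) (G 1))"
proof (rule hom_intro[where h = "\<lambda>p. cat (F (fst p)) (G (fst p)) (snd p)"])
  show "continuous_on ({0..1} \<times> cube) (\<lambda>p. cat (F (fst p)) (G (fst p)) (snd p))"
    by (rule cat_family[OF cF cG m1])
  show "(\<lambda>p. cat (F (fst p)) (G (fst p)) (snd p)) ` ({0..1} \<times> cube) \<subseteq> X"
  proof clarsimp
    fix s and t :: "real^'n" assume st: "0 \<le> s" "s \<le> (1::real)" "t \<in> cube"
    show "cat (F s) (G s) t \<in> X"
      by (rule cat_prop[where Q = "\<lambda>y. y \<in> X"]) (use inX sk_cube st in auto)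
  qed
  show "cat (F (fst (0::real, t))) (G (fst (0::real, t))) (snd (0::real, t)) = cat (F 0) (G 0) t" for t
    by simp
  show "cat (F (fst (1::real, t))) (G (fst (1::real, t))) (snd (1::real, t)) = cat (F 1) (G 1) t" for t
    by simp
  show "cat (F (fst (s, t))) (G (fst (s, t))) (snd (s, t)) = x0"
    if s: "s \<in> {0..1}" and t: "t \<in> cube_bdry" for s t
  proof -
    have tc: "t \<in> cube" and tb: "t $ coord0 = 0 \<or> t $ coord0 = 1 \<or> sideb t" using t by (auto simp: bdry_iff)
    consider "t $ coord0 = 0" | "t $ coord0 = 1" | "sideb t" using tb by blast
    then show ?thesis
    proof cases
      case 1
      then show ?thesis using b0[OF s tc] by (simp add: cat_def)
    next
      case 2
      then show ?thesis using b1[OF s tc] by (simp add: cat_def)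
    next
      case 3
      show ?thesis
        by simp (rule cat_prop[where Q = "\<lambda>y. y = x0"], (use sd[OF s] sk_cube[OF tc] 3 tc in auto))
    qed
  qed
qed


lemma fam_of_hom:
  fixes H :: "real \<times> (real^'n::finite) \<Rightarrow> 'a::metric_space"
  shows "continuous_on ({0..1::real} \<times> cube) H \<Longrightarrow> continuous_on ({0..1::real} \<times> cube) (\<lambda>p. (\<lambda>s u. H (s, u)) (fst p) (snd p))"
  by simp

lemma lrev_fam:
  fixes \<beta> :: "real^'n::finite \<Rightarrow> 'a::metric_space"
  assumes "continuous_on cube \<beta>"
  shows "continuous_on ({0..1::real} \<times> cube) (\<lambda>p. (\<lambda>s. lrev \<beta>) (fst p) (snd p))"
  unfolding lrev_def
  by (rule beta_cont[OF assms]) (auto intro!: continuous_intros simp: cube_iff mem_Times_iff)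

lemma A1:
  fixes \<alpha> \<beta> \<beta>' :: "real^'n::finite \<Rightarrow> 'a::metric_space"
  assumes a: "\<alpha> \<in> Omega X x0" and b: "\<beta> \<in> Omega X x0"
    and hb: "homotopic_with_canon (HP x0) cube X \<beta>' \<beta>"
  shows "homotopic_with_canon (HP x0) cube X (tri \<alpha> (lrev \<beta>) \<beta>') (tri \<alpha> (lrev \<beta>) \<beta>)"
proof -
  obtain H :: "real \<times> (real^'n) \<Rightarrow> 'a" where H: "continuous_on ({0..1::real} \<times> cube) H" "H ` ({0..1} \<times> cube) \<subseteq> X"
      "\<forall>t\<in>cube. H (0, t) = \<beta>' t" "\<forall>t\<in>cube. H (1, t) = \<beta> t"
      "\<forall>s\<in>{0..1}. \<forall>t\<in>cube_bdry. H (s, t) = x0"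
    using hom_ex[OF hb] by blast
  have "homotopic_with_canon (HP x0) cube X (tri ((\<lambda>s. \<alpha>) 0) ((\<lambda>s. lrev \<beta>) 0) ((\<lambda>s u. H (s, u)) 0))
      (tri ((\<lambda>s. \<alpha>) 1) ((\<lambda>s. lrev \<beta>) 1) ((\<lambda>s u. H (s, u)) 1))"
  proof (rule tri_hom)
    show "continuous_on ({0..1::real} \<times> cube) (\<lambda>p. (\<lambda>s. \<alpha>) (fst p) (snd p))"
      using const_fam[OF Omega_cont[OF a]] by simp
    show "continuous_on ({0..1::real} \<times> cube) (\<lambda>p. (\<lambda>s. lrev \<beta>) (fst p) (snd p))"
      by (rule lrev_fam[OF Omega_cont[OF b]])
    show "continuous_on ({0..1::real} \<times> cube) (\<lambda>p. (\<lambda>s u. H (s, u)) (fst p) (snd p))"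
      using H(1) by simp
    show "(\<lambda>s. \<alpha>) s u \<in> X \<and> (\<lambda>s. lrev \<beta>) s u \<in> X \<and> (\<lambda>s u. H (s, u)) s u \<in> X"
      if "s \<in> {0..1}" "u \<in> cube" for s u
      using that H(2) Omega_in[OF a] Omega_in[OF b] sk_cube[of u "1 - u $ coord0"]
      by (auto simp: lrev_def cube_iff)
    show "(\<lambda>s. \<alpha>) s (sk t 1) = (\<lambda>s. lrev \<beta>) s (sk t 0)" if "s \<in> {0..1}" "t \<in> cube" for s t
      using Omega_bd[OF a sk_bdry[OF that(2)]] Omega_bd[OF b sk_bdry[OF that(2)]]
      by (simp add: lrev_def)
    show "(\<lambda>s. lrev \<beta>) s (sk t 1) = (\<lambda>s u. H (s, u)) s (sk t 0)" if "s \<in> {0..1}" "t \<in> cube" for s t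
      using Omega_bd[OF b sk_bdry[OF that(2)]] H(5) that sk_bdry[OF that(2)]
      by (simp add: lrev_def)
    show "(\<lambda>s. \<alpha>) s (sk t 0) = x0" if "s \<in> {0..1}" "t \<in> cube" for s t
      using Omega_bd[OF a sk_bdry[OF that(2)]] by simp
    show "(\<lambda>s u. H (s, u)) s (sk t 1) = x0" if "s \<in> {0..1}" "t \<in> cube" for s t
      using H(5) that sk_bdry[OF that(2)] by simp
    show "(\<lambda>s. \<alpha>) s u = x0 \<and> (\<lambda>s. lrev \<beta>) s u = x0 \<and> (\<lambda>s u. H (s, u)) s u = x0"
      if "s \<in> {0..1}" "u \<in> cube" "sideb u" for s u
    proof -
      have "u \<in> cube_bdry" using that by (simp add: bdry_iff)
      moreover have "sk u (1 - u $ coord0) \<in> cube_bdry"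
        using that by (intro sk_side) (auto simp: cube_iff)
      ultimately show ?thesis using Omega_bd[OF a] Omega_bd[OF b] H(5) that by (simp add: lrev_def)
    qed
  qed
  then show ?thesis
    by (rule hom_eq) (auto intro!: tri_cong simp: H(3,4))
qed

lemma A2:
  fixes \<alpha> \<beta> :: "real^'n::finite \<Rightarrow> 'a::metric_space"
  assumes a: "\<alpha> \<in> Omega X x0" and b: "\<beta> \<in> Omega X x0"
  shows "homotopic_with_canon (HP x0) cube X (tri \<alpha> (lrev \<beta>) \<beta>) (tri \<alpha> (\<lambda>u. x0) (\<lambda>u. x0))"
proof -
  define G where "G = (\<lambda>s u. \<beta> (sk u (max (1 - u $ coord0) s)))"
  define K where "K = (\<lambda>s u. \<beta> (sk u (max (u $ coord0) s)))"
  have "homotopic_with_canon (HP x0) cube X (tri ((\<lambda>s. \<alpha>) 0) (G 0) (K 0)) (tri ((\<lambda>s. \<alpha>) 1) (G 1) (K 1))"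
  proof (rule tri_hom)
    show "continuous_on ({0..1::real} \<times> cube) (\<lambda>p. (\<lambda>s. \<alpha>) (fst p) (snd p))"
      using const_fam[OF Omega_cont[OF a]] by simp
    show "continuous_on ({0..1::real} \<times> cube) (\<lambda>p. G (fst p) (snd p))"
      unfolding G_def
      by (rule beta_cont[OF Omega_cont[OF b]]) (auto intro!: continuous_intros simp: cube_iff mem_Times_iff)
    show "continuous_on ({0..1::real} \<times> cube) (\<lambda>p. K (fst p) (snd p))"
      unfolding K_def
      by (rule beta_cont[OF Omega_cont[OF b]]) (auto intro!: continuous_intros simp: cube_iff mem_Times_iff)
    show "(\<lambda>s. \<alpha>) s u \<in> X \<and> G s u \<in> X \<and> K s u \<in> X"
      if "s \<in> {0..1}" "u \<in> cube" for s u
    proof -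
      have "sk u (max (1 - u $ coord0) s) \<in> cube" using that by (intro sk_cube) (auto simp: cube_iff)
      moreover have "sk u (max (u $ coord0) s) \<in> cube" using that by (intro sk_cube) (auto simp: cube_iff)
      ultimately show ?thesis using that Omega_in[OF a] Omega_in[OF b] by (simp add: G_def K_def)
    qed
    show "(\<lambda>s. \<alpha>) s (sk t 1) = G s (sk t 0)" if "s \<in> {0..1}" "t \<in> cube" for s t
    proof -
      have "max (1 - 0) s = 1" using that by simp
      then show ?thesis
        using Omega_bd[OF a sk_bdry[OF that(2)]] Omega_bd[OF b sk_bdry[OF that(2)]]
        by (simp add: G_def)
    qed
    show "G s (sk t 1) = K s (sk t 0)" if "s \<in> {0..1}" "t \<in> cube" for s t
      by (simp add: G_def K_def)
    show "(\<lambda>s. \<alpha>) s (sk t 0) = x0" if "s \<in> {0..1}" "t \<in> cube" for s t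
      using Omega_bd[OF a sk_bdry[OF that(2)]] by simp
    show "K s (sk t 1) = x0" if "s \<in> {0..1}" "t \<in> cube" for s t
    proof -
      have "max 1 s = 1" using that by simp
      then show ?thesis using Omega_bd[OF b sk_bdry[OF that(2)]] by (simp add: K_def)
    qed
    show "(\<lambda>s. \<alpha>) s u = x0 \<and> G s u = x0 \<and> K s u = x0"
      if "s \<in> {0..1}" "u \<in> cube" "sideb u" for s u
    proof -
      have "u \<in> cube_bdry" using that by (simp add: bdry_iff)
      moreover have "sk u (max (1 - u $ coord0) s) \<in> cube_bdry" using that by (intro sk_side) (auto simp: cube_iff)
      moreover have "sk u (max (u $ coord0) s) \<in> cube_bdry" using that by (intro sk_side) (auto simp: cube_iff)
      ultimately show ?thesis using Omega_bd[OF a] Omega_bd[OF b] by (simp add: G_def K_def)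
    qed
  qed
  moreover have "G 0 u = lrev \<beta> u" "K 0 u = \<beta> u" "G 1 u = x0" "K 1 u = x0" if "u \<in> cube" for u
  proof -
    have u: "0 \<le> u $ coord0" "u $ coord0 \<le> 1" using that by (auto simp: cube_iff)
    then have e: "max (1 - u $ coord0) 0 = 1 - u $ coord0" "max (u $ coord0) 0 = u $ coord0"
      "max (1 - u $ coord0) 1 = 1" "max (u $ coord0) 1 = 1" by auto
    show "G 0 u = lrev \<beta> u" by (simp add: G_def lrev_def e)
    show "K 0 u = \<beta> u" by (simp add: K_def e sk_self)
    show "G 1 u = x0" using Omega_bd[OF b sk_bdry[OF that]] by (simp add: G_def e)
    show "K 1 u = x0" using Omega_bd[OF b sk_bdry[OF that]] by (simp add: K_def e)
  qed
  ultimately show ?thesis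
    by (elim hom_eq) (auto intro!: tri_cong)
qed

lemma convex01:
  fixes s a b :: real
  assumes "0 \<le> s" "s \<le> 1" "0 \<le> a" "a \<le> 1" "0 \<le> b" "b \<le> 1"
  shows "0 \<le> (1 - s) * a + s * b" "(1 - s) * a + s * b \<le> 1"
proof -
  show "0 \<le> (1 - s) * a + s * b" using assms by simp
  have "(1 - s) * a \<le> (1 - s) * 1" by (rule mult_left_mono) (use assms in auto)
  moreover have "s * b \<le> s * 1" by (rule mult_left_mono) (use assms in auto)
  ultimately show "(1 - s) * a + s * b \<le> 1" by simp
qed

lemma reparam:
  fixes \<alpha> :: "real^'n::finite \<Rightarrow> 'a::metric_space"
  assumes a: "\<alpha> \<in> Omega X x0" and psi: "continuous_on {0..1} \<psi>"
    and psi01: "\<And>x. 0 \<le> x \<Longrightarrow> x \<le> 1 \<Longrightarrow> 0 \<le> \<psi> x \<and> \<psi> x \<le> 1"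
    and psi0: "\<psi> 0 = 0" and psi1: "\<psi> 1 = 1"
  shows "homotopic_with_canon (HP x0) cube X (\<lambda>t. \<alpha> (sk t (\<psi> (t $ coord0)))) \<alpha>"
proof (rule hom_intro[where h = "\<lambda>p. \<alpha> (sk (snd p) ((1 - fst p) * \<psi> (snd p $ coord0) + fst p * snd p $ coord0))"])
  have c: "0 \<le> (1 - s) * \<psi> (t $ coord0) + s * t $ coord0 \<and> (1 - s) * \<psi> (t $ coord0) + s * t $ coord0 \<le> 1"
    if "0 \<le> s" "s \<le> 1" "t \<in> cube" for s and t :: "real^'n"
  proof -
    have "0 \<le> t $ coord0" "t $ coord0 \<le> 1" using that by (auto simp: cube_iff)
    then show ?thesis using convex01[OF that(1,2), of "\<psi> (t $ coord0)" "t $ coord0"] psi01 by auto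
  qed
  have cpsi: "continuous_on ({0..1::real} \<times> cube) (\<lambda>p::real \<times> (real^'n). \<psi> (snd p $ coord0))"
    by (rule continuous_on_compose2[OF psi]) (auto intro!: continuous_intros simp: cube_iff)
  show "continuous_on ({0..1::real} \<times> cube) (\<lambda>p. \<alpha> (sk (snd p) ((1 - fst p) * \<psi> (snd p $ coord0) + fst p * snd p $ coord0)))"
    by (rule beta_cont[OF Omega_cont[OF a]]) (auto intro!: continuous_intros cpsi simp: mem_Times_iff c)
  show "(\<lambda>p. \<alpha> (sk (snd p) ((1 - fst p) * \<psi> (snd p $ coord0) + fst p * snd p $ coord0))) ` ({0..1} \<times> cube) \<subseteq> X"
    apply clarsimp
    subgoal for s t using c[of s t] by (intro Omega_in[OF a] sk_cube) auto
    done
  show "\<alpha> (sk (snd (0::real, t)) ((1 - fst (0::real, t)) * \<psi> (snd (0::real, t) $ coord0) + fst (0::real, t) * snd (0::real, t) $ coord0)) = \<alpha> (sk t (\<psi> (t $ coord0)))" for t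
    by simp
  show "\<alpha> (sk (snd (1::real, t)) ((1 - fst (1::real, t)) * \<psi> (snd (1::real, t) $ coord0) + fst (1::real, t) * snd (1::real, t) $ coord0)) = \<alpha> t" for t
    by (simp add: sk_self)
  show "\<alpha> (sk (snd (s, t)) ((1 - fst (s, t)) * \<psi> (snd (s, t) $ coord0) + fst (s, t) * snd (s, t) $ coord0)) = x0"
    if s: "s \<in> {0..1}" and t: "t \<in> cube_bdry" for s t
  proof -
    have tc: "t \<in> cube" and tb: "t $ coord0 = 0 \<or> t $ coord0 = 1 \<or> sideb t" using t by (auto simp: bdry_iff)
    have "sk t ((1 - s) * \<psi> (t $ coord0) + s * t $ coord0) \<in> cube_bdry"
    proof -
      consider "t $ coord0 = 0" | "t $ coord0 = 1" | "sideb t" using tb by blast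
      then show ?thesis
      proof cases
        case 1 then show ?thesis using sk_bdry[OF tc, of 0] by (simp add: psi0)
      next
        case 2 then show ?thesis using sk_bdry[OF tc, of 1] by (simp add: psi1 algebra_simps)
      next
        case 3 then show ?thesis using c[of s t] s tc by (intro sk_side) auto
      qed
    qed
    then show ?thesis using Omega_bd[OF a] by simp
  qed
qed


lemma A3:
  fixes \<alpha> :: "real^'n::finite \<Rightarrow> 'a::metric_space"
  assumes a: "\<alpha> \<in> Omega X x0"
  shows "homotopic_with_canon (HP x0) cube X (tri \<alpha> (\<lambda>u. x0) (\<lambda>u. x0)) \<alpha>"
proof -
  have r: "homotopic_with_canon (HP x0) cube X (\<lambda>t. \<alpha> (sk t ((\<lambda>x. min (3 * x) 1) (t $ coord0)))) \<alpha>"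
    by (rule reparam[OF a]) (auto intro!: continuous_intros)
  show ?thesis
  proof (rule hom_eq[OF r])
    fix t :: "real^'n" assume t: "t \<in> cube"
    show "tri \<alpha> (\<lambda>u. x0) (\<lambda>u. x0) t = \<alpha> (sk t ((\<lambda>x. min (3 * x) 1) (t $ coord0)))"
    proof (cases "t $ coord0 \<le> 1/3")
      case True
      then have "min (3 * t $ coord0) 1 = 3 * t $ coord0" by auto
      then show ?thesis using True by (simp add: tri_def)
    next
      case False
      then have "min (3 * t $ coord0) 1 = 1" by auto
      then show ?thesis using False Omega_bd[OF a sk_bdry[OF t, of 1]] by (simp add: tri_def)
    qed
  qed simp
qed

lemma B2:
  fixes \<gamma> :: "real^'n::finite \<Rightarrow> 'a::metric_space"
  assumes a: "\<gamma> \<in> Omega X x0"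
  shows "homotopic_with_canon (HP x0) cube X (tri (\<lambda>u. x0) (\<lambda>u. x0) \<gamma>) \<gamma>"
proof -
  have r: "homotopic_with_canon (HP x0) cube X (\<lambda>t. \<gamma> (sk t ((\<lambda>x. max (3 * x - 2) 0) (t $ coord0)))) \<gamma>"
    by (rule reparam[OF a]) (auto intro!: continuous_intros)
  show ?thesis
  proof (rule hom_eq[OF r])
    fix t :: "real^'n" assume t: "t \<in> cube"
    show "tri (\<lambda>u. x0) (\<lambda>u. x0) \<gamma> t = \<gamma> (sk t ((\<lambda>x. max (3 * x - 2) 0) (t $ coord0)))"
    proof (cases "t $ coord0 \<le> 2/3")
      case True
      then have "max (3 * t $ coord0 - 2) 0 = 0" by auto
      then show ?thesis using True Omega_bd[OF a sk_bdry[OF t, of 0]] by (simp add: tri_def)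
    next
      case False
      then have "max (3 * t $ coord0 - 2) 0 = 3 * t $ coord0 - 2" by auto
      then show ?thesis using False by (simp add: tri_def)
    qed
  qed simp
qed

lemma B1:
  fixes \<beta> \<gamma> :: "real^'n::finite \<Rightarrow> 'a::metric_space"
  assumes b: "\<beta> \<in> Omega X x0" and c: "\<gamma> \<in> Omega X x0"
  shows "homotopic_with_canon (HP x0) cube X (tri \<beta> (lrev \<beta>) \<gamma>) (tri (\<lambda>u. x0) (\<lambda>u. x0) \<gamma>)"
proof -
  define F where "F = (\<lambda>s u. \<beta> (sk u (min (u $ coord0) (1 - s))))"
  define G where "G = (\<lambda>s u. \<beta> (sk u (min (1 - u $ coord0) (1 - s))))"
  have "homotopic_with_canon (HP x0) cube X (tri (F 0) (G 0) ((\<lambda>s. \<gamma>) 0)) (tri (F 1) (G 1) ((\<lambda>s. \<gamma>) 1))"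
  proof (rule tri_hom)
    show "continuous_on ({0..1::real} \<times> cube) (\<lambda>p. (\<lambda>s. \<gamma>) (fst p) (snd p))"
      using const_fam[OF Omega_cont[OF c]] by simp
    show "continuous_on ({0..1::real} \<times> cube) (\<lambda>p. F (fst p) (snd p))"
      unfolding F_def
      by (rule beta_cont[OF Omega_cont[OF b]]) (auto intro!: continuous_intros simp: cube_iff mem_Times_iff)
    show "continuous_on ({0..1::real} \<times> cube) (\<lambda>p. G (fst p) (snd p))"
      unfolding G_def
      by (rule beta_cont[OF Omega_cont[OF b]]) (auto intro!: continuous_intros simp: cube_iff mem_Times_iff)
    show "F s u \<in> X \<and> G s u \<in> X \<and> (\<lambda>s. \<gamma>) s u \<in> X"
      if "s \<in> {0..1}" "u \<in> cube" for s u
    proof -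
      have "sk u (min (u $ coord0) (1 - s)) \<in> cube" using that by (intro sk_cube) (auto simp: cube_iff)
      moreover have "sk u (min (1 - u $ coord0) (1 - s)) \<in> cube" using that by (intro sk_cube) (auto simp: cube_iff)
      ultimately show ?thesis using that Omega_in[OF b] Omega_in[OF c] by (simp add: F_def G_def)
    qed
    show "F s (sk t 1) = G s (sk t 0)" if "s \<in> {0..1}" "t \<in> cube" for s t
      by (simp add: F_def G_def)
    show "G s (sk t 1) = (\<lambda>s. \<gamma>) s (sk t 0)" if "s \<in> {0..1}" "t \<in> cube" for s t
    proof -
      have "min 0 (1 - s) = 0" using that by simp
      then show ?thesis
        using Omega_bd[OF b sk_bdry[OF that(2)]] Omega_bd[OF c sk_bdry[OF that(2)]]
        by (simp add: G_def)
    qed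
    show "F s (sk t 0) = x0" if "s \<in> {0..1}" "t \<in> cube" for s t
    proof -
      have "min 0 (1 - s) = 0" using that by simp
      then show ?thesis using Omega_bd[OF b sk_bdry[OF that(2)]] by (simp add: F_def)
    qed
    show "(\<lambda>s. \<gamma>) s (sk t 1) = x0" if "s \<in> {0..1}" "t \<in> cube" for s t
      using Omega_bd[OF c sk_bdry[OF that(2)]] by simp
    show "F s u = x0 \<and> G s u = x0 \<and> (\<lambda>s. \<gamma>) s u = x0"
      if "s \<in> {0..1}" "u \<in> cube" "sideb u" for s u
    proof -
      have "u \<in> cube_bdry" using that by (simp add: bdry_iff)
      moreover have "sk u (min (u $ coord0) (1 - s)) \<in> cube_bdry" using that by (intro sk_side) (auto simp: cube_iff)
      moreover have "sk u (min (1 - u $ coord0) (1 - s)) \<in> cube_bdry" using that by (intro sk_side) (auto simp: cube_iff)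
      ultimately show ?thesis using Omega_bd[OF b] Omega_bd[OF c] by (simp add: F_def G_def)
    qed
  qed
  moreover have "F 0 u = \<beta> u" "G 0 u = lrev \<beta> u" "F 1 u = x0" "G 1 u = x0" if "u \<in> cube" for u
  proof -
    have u: "0 \<le> u $ coord0" "u $ coord0 \<le> 1" using that by (auto simp: cube_iff)
    then have e: "min (u $ coord0) 1 = u $ coord0" "min (1 - u $ coord0) 1 = 1 - u $ coord0"
      "min (u $ coord0) 0 = 0" "min (1 - u $ coord0) 0 = 0" by auto
    show "F 0 u = \<beta> u" by (simp add: F_def e sk_self)
    show "G 0 u = lrev \<beta> u" by (simp add: G_def lrev_def e)
    show "F 1 u = x0" using Omega_bd[OF b sk_bdry[OF that]] by (simp add: F_def e)
    show "G 1 u = x0" using Omega_bd[OF b sk_bdry[OF that]] by (simp add: G_def e)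
  qed
  ultimately show ?thesis
    by (elim hom_eq) (auto intro!: tri_cong)
qed

lemma mu_bdd:
  fixes \<alpha> \<beta> :: "real^'n::finite \<Rightarrow> 'a::metric_space"
  assumes "continuous_on cube \<alpha>" "continuous_on cube \<beta>"
  shows "bdd_above ((\<lambda>t. dist (\<alpha> t) (\<beta> t)) ` cube)"
proof -
  have "continuous_on cube (\<lambda>t. dist (\<alpha> t) (\<beta> t))" by (intro continuous_intros assms)
  moreover have "compact cube" unfolding cube_def by (rule compact_cbox)
  ultimately have "compact ((\<lambda>t. dist (\<alpha> t) (\<beta> t)) ` cube)"
    by (rule compact_continuous_image)
  then show ?thesis by (intro bounded_imp_bdd_above compact_imp_bounded)
qed

lemma mu_upper:
  fixes \<alpha> \<beta> :: "real^'n::finite \<Rightarrow> 'a::metric_space"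
  assumes "continuous_on cube \<alpha>" "continuous_on cube \<beta>" "t \<in> cube"
  shows "dist (\<alpha> t) (\<beta> t) \<le> mu \<alpha> \<beta>"
  unfolding mu_def by (rule cSUP_upper[OF assms(3) mu_bdd[OF assms(1,2)]])

lemma mu_least:
  fixes \<alpha> \<beta> :: "real^'n::finite \<Rightarrow> 'a::metric_space"
  assumes "\<And>t. t \<in> cube \<Longrightarrow> dist (\<alpha> t) (\<beta> t) \<le> c"
  shows "mu \<alpha> \<beta> \<le> c"
  unfolding mu_def by (rule cSUP_least) (use zero_cube assms in auto)

lemma mu_nonneg:
  fixes \<alpha> \<beta> :: "real^'n::finite \<Rightarrow> 'a::metric_space"
  assumes "continuous_on cube \<alpha>" "continuous_on cube \<beta>"
  shows "0 \<le> mu \<alpha> \<beta>"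
  using mu_upper[OF assms zero_cube] zero_le_dist[of "\<alpha> 0" "\<beta> 0"] by linarith

lemma mu_self:
  fixes \<alpha> :: "real^'n::finite \<Rightarrow> 'a::metric_space"
  shows "mu \<alpha> \<alpha> \<le> 0"
  by (rule mu_least) simp

lemma key:
  fixes \<alpha> \<beta> \<beta>' \<gamma> :: "real^'n::finite \<Rightarrow> 'a::metric_space"
  assumes a: "\<alpha> \<in> Omega X x0" and b: "\<beta> \<in> Omega X x0" and b': "\<beta>' \<in> Omega X x0" and c: "\<gamma> \<in> Omega X x0"
    and hb: "homotopic_with_canon (HP x0) cube X \<beta> \<beta>'"
  shows "\<exists>P Q. homotopic_with_canon (HP x0) cube X \<alpha> P \<and> homotopic_with_canon (HP x0) cube X \<gamma> Q
     \<and> mu P Q \<le> mu \<alpha> \<beta> + mu \<beta>' \<gamma>"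
proof (intro exI conjI)
  have "homotopic_with_canon (HP x0) cube X (tri \<alpha> (lrev \<beta>) \<beta>') \<alpha>"
    by (rule hom_trans[OF A1[OF a b hom_sym[OF hb]] hom_trans[OF A2[OF a b] A3[OF a]]])
  then show "homotopic_with_canon (HP x0) cube X \<alpha> (tri \<alpha> (lrev \<beta>) \<beta>')" by (rule hom_sym)
  have "homotopic_with_canon (HP x0) cube X (tri \<beta> (lrev \<beta>) \<gamma>) \<gamma>"
    by (rule hom_trans[OF B1[OF b c] B2[OF c]])
  then show "homotopic_with_canon (HP x0) cube X \<gamma> (tri \<beta> (lrev \<beta>) \<gamma>)" by (rule hom_sym)
  have n1: "0 \<le> mu \<alpha> \<beta>" and n2: "0 \<le> mu \<beta>' \<gamma>"
    using mu_nonneg Omega_cont a b b' c by blast+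
  show "mu (tri \<alpha> (lrev \<beta>) \<beta>') (tri \<beta> (lrev \<beta>) \<gamma>) \<le> mu \<alpha> \<beta> + mu \<beta>' \<gamma>"
  proof (rule mu_least, rule tri_dist)
    show "dist (\<alpha> u) (\<beta> u) \<le> mu \<alpha> \<beta> + mu \<beta>' \<gamma>" if "u \<in> cube" for u
      using mu_upper[OF Omega_cont[OF a] Omega_cont[OF b] that] n2 by linarith
    show "dist (lrev \<beta> u) (lrev \<beta> u) \<le> mu \<alpha> \<beta> + mu \<beta>' \<gamma>" if "u \<in> cube" for u
      using n1 n2 by simp
    show "dist (\<beta>' u) (\<gamma> u) \<le> mu \<alpha> \<beta> + mu \<beta>' \<gamma>" if "u \<in> cube" for u
      using mu_upper[OF Omega_cont[OF b'] Omega_cont[OF c] that] n1 by linarith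
  qed
qed

lemma cat_hom_resp:
  fixes \<alpha> \<alpha>' \<beta> \<beta>' :: "real^'n::finite \<Rightarrow> 'a::metric_space"
  assumes ha: "homotopic_with_canon (HP x0) cube X \<alpha> \<alpha>'" and hb: "homotopic_with_canon (HP x0) cube X \<beta> \<beta>'"
  shows "homotopic_with_canon (HP x0) cube X (cat \<alpha> \<beta>) (cat \<alpha>' \<beta>')"
proof -
  obtain H :: "real \<times> (real^'n) \<Rightarrow> 'a" where H: "continuous_on ({0..1} \<times> cube) H" "H ` ({0..1} \<times> cube) \<subseteq> X"
      "\<forall>t\<in>cube. H (0, t) = \<alpha> t" "\<forall>t\<in>cube. H (1, t) = \<alpha>' t"
      "\<forall>s\<in>{0..1}. \<forall>t\<in>cube_bdry. H (s, t) = x0"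
    using hom_ex[OF ha] by blast
  obtain K :: "real \<times> (real^'n) \<Rightarrow> 'a" where K: "continuous_on ({0..1} \<times> cube) K" "K ` ({0..1} \<times> cube) \<subseteq> X"
      "\<forall>t\<in>cube. K (0, t) = \<beta> t" "\<forall>t\<in>cube. K (1, t) = \<beta>' t"
      "\<forall>s\<in>{0..1}. \<forall>t\<in>cube_bdry. K (s, t) = x0"
    using hom_ex[OF hb] by blast
  have "homotopic_with_canon (HP x0) cube X (cat ((\<lambda>s u. H (s, u)) 0) ((\<lambda>s u. K (s, u)) 0))
      (cat ((\<lambda>s u. H (s, u)) 1) ((\<lambda>s u. K (s, u)) 1))"
  proof (rule cat_hom)
    show "continuous_on ({0..1::real} \<times> cube) (\<lambda>p. (\<lambda>s u. H (s, u)) (fst p) (snd p))"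
      using H(1) by simp
    show "continuous_on ({0..1::real} \<times> cube) (\<lambda>p. (\<lambda>s u. K (s, u)) (fst p) (snd p))"
      using K(1) by simp
    show "(\<lambda>s u. H (s, u)) s u \<in> X \<and> (\<lambda>s u. K (s, u)) s u \<in> X" if "s \<in> {0..1}" "u \<in> cube" for s u
      using H(2) K(2) that by auto
    show "(\<lambda>s u. H (s, u)) s (sk t 1) = (\<lambda>s u. K (s, u)) s (sk t 0)" if "s \<in> {0..1}" "t \<in> cube" for s t
      using H(5) K(5) that sk_bdry[OF that(2)] by simp
    show "(\<lambda>s u. H (s, u)) s (sk t 0) = x0" if "s \<in> {0..1}" "t \<in> cube" for s t
      using H(5) that sk_bdry[OF that(2)] by simp
    show "(\<lambda>s u. K (s, u)) s (sk t 1) = x0" if "s \<in> {0..1}" "t \<in> cube" for s t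
      using K(5) that sk_bdry[OF that(2)] by simp
    show "(\<lambda>s u. H (s, u)) s u = x0 \<and> (\<lambda>s u. K (s, u)) s u = x0" if "s \<in> {0..1}" "u \<in> cube" "sideb u" for s u
    proof -
      have "u \<in> cube_bdry" using that by (simp add: bdry_iff)
      then show ?thesis using H(5) K(5) that by simp
    qed
  qed
  then show ?thesis
    by (rule hom_eq) (auto intro!: cat_cong simp: H(3,4) K(3,4))
qed

lemma rev_hom_resp:
  fixes \<alpha> \<alpha>' :: "real^'n::finite \<Rightarrow> 'a::metric_space"
  assumes ha: "homotopic_with_canon (HP x0) cube X \<alpha> \<alpha>'"
  shows "homotopic_with_canon (HP x0) cube X (lrev \<alpha>) (lrev \<alpha>')"
proof -
  obtain H :: "real \<times> (real^'n) \<Rightarrow> 'a" where H: "continuous_on ({0..1} \<times> cube) H" "H ` ({0..1} \<times> cube) \<subseteq> X"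
      "\<forall>t\<in>cube. H (0, t) = \<alpha> t" "\<forall>t\<in>cube. H (1, t) = \<alpha>' t"
      "\<forall>s\<in>{0..1}. \<forall>t\<in>cube_bdry. H (s, t) = x0"
    using hom_ex[OF ha] by blast
  have skc: "sk t (1 - t $ coord0) \<in> cube" if "t \<in> cube" for t :: "real^'n"
    using that by (intro sk_cube) (auto simp: cube_iff)
  show ?thesis
  proof (rule hom_intro[where h = "\<lambda>p. H (fst p, sk (snd p) (1 - snd p $ coord0))"])
    have "continuous_on ({0..1} \<times> cube) (\<lambda>p. (\<lambda>s u. H (s, u)) (fst p) (sk (snd p) (1 - snd p $ coord0)))"
      by (rule piece_cont) (use H(1) in \<open>auto intro!: continuous_intros simp: cube_iff mem_Times_iff\<close>)
    then show "continuous_on ({0..1} \<times> cube) (\<lambda>p. H (fst p, sk (snd p) (1 - snd p $ coord0)))"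
      by simp
    show "(\<lambda>p. H (fst p, sk (snd p) (1 - snd p $ coord0))) ` ({0..1} \<times> cube) \<subseteq> X"
      using H(2) skc by auto
    show "H (fst (0::real, t), sk (snd (0::real, t)) (1 - snd (0::real, t) $ coord0)) = lrev \<alpha> t" if "t \<in> cube" for t
      using H(3) skc[OF that] by (simp add: lrev_def)
    show "H (fst (1::real, t), sk (snd (1::real, t)) (1 - snd (1::real, t) $ coord0)) = lrev \<alpha>' t" if "t \<in> cube" for t
      using H(4) skc[OF that] by (simp add: lrev_def)
    show "H (fst (s, t), sk (snd (s, t)) (1 - snd (s, t) $ coord0)) = x0"
      if s: "s \<in> {0..1}" and t: "t \<in> cube_bdry" for s t
    proof -
      have tc: "t \<in> cube" and tb: "t $ coord0 = 0 \<or> t $ coord0 = 1 \<or> sideb t" using t by (auto simp: bdry_iff)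
      have "sk t (1 - t $ coord0) \<in> cube_bdry"
      proof -
        consider "t $ coord0 = 0" | "t $ coord0 = 1" | "sideb t" using tb by blast
        then show ?thesis
        proof cases
          case 1 then show ?thesis using sk_bdry[OF tc, of 1] by simp
        next
          case 2 then show ?thesis using sk_bdry[OF tc, of 0] by simp
        next
          case 3 then show ?thesis using tc by (intro sk_side) (auto simp: cube_iff)
        qed
      qed
      then show ?thesis using H(5) s by simp
    qed
  qed
qed


lemma cat_Omega:
  fixes \<alpha> \<beta> :: "real^'n::finite \<Rightarrow> 'a::metric_space"
  shows "\<alpha> \<in> Omega X x0 \<Longrightarrow> \<beta> \<in> Omega X x0 \<Longrightarrow> cat \<alpha> \<beta> \<in> Omega X x0"
  using hom_Omega(1)[OF cat_hom_resp[OF hom_refl hom_refl]] by blast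

lemma rev_Omega:
  fixes \<alpha> :: "real^'n::finite \<Rightarrow> 'a::metric_space"
  shows "\<alpha> \<in> Omega X x0 \<Longrightarrow> lrev \<alpha> \<in> Omega X x0"
  using hom_Omega(1)[OF rev_hom_resp[OF hom_refl]] by blast

lemma mu_cat:
  fixes \<alpha> \<beta> \<alpha>' \<beta>' :: "real^'n::finite \<Rightarrow> 'a::metric_space"
  assumes "\<alpha> \<in> Omega X x0" "\<beta> \<in> Omega X x0" "\<alpha>' \<in> Omega X x0" "\<beta>' \<in> Omega X x0"
  shows "mu (cat \<alpha> \<beta>) (cat \<alpha>' \<beta>') \<le> max (mu \<alpha> \<alpha>') (mu \<beta> \<beta>')"
proof (rule mu_least, rule cat_dist)
  show "dist (\<alpha> u) (\<alpha>' u) \<le> max (mu \<alpha> \<alpha>') (mu \<beta> \<beta>')" if "u \<in> cube" for u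
    using mu_upper[OF Omega_cont[OF assms(1)] Omega_cont[OF assms(3)] that] by linarith
  show "dist (\<beta> u) (\<beta>' u) \<le> max (mu \<alpha> \<alpha>') (mu \<beta> \<beta>')" if "u \<in> cube" for u
    using mu_upper[OF Omega_cont[OF assms(2)] Omega_cont[OF assms(4)] that] by linarith
qed

lemma mu_rev:
  fixes \<alpha> \<alpha>' :: "real^'n::finite \<Rightarrow> 'a::metric_space"
  assumes "\<alpha> \<in> Omega X x0" "\<alpha>' \<in> Omega X x0"
  shows "mu (lrev \<alpha>) (lrev \<alpha>') \<le> mu \<alpha> \<alpha>'"
proof (rule mu_least)
  fix t :: "real^'n" assume t: "t \<in> cube"
  have "sk t (1 - t $ coord0) \<in> cube" using t by (intro sk_cube) (auto simp: cube_iff)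
  then show "dist (lrev \<alpha> t) (lrev \<alpha>' t) \<le> mu \<alpha> \<alpha>'"
    unfolding lrev_def by (rule mu_upper[OF Omega_cont[OF assms(1)] Omega_cont[OF assms(2)]])
qed

lemma hclass_mem:
  fixes \<alpha> :: "real^'n::finite \<Rightarrow> 'a::metric_space"
  shows "\<alpha> \<in> Omega X x0 \<Longrightarrow> \<alpha> \<in> hclass X x0 \<alpha>"
  unfolding hclass_def using hom_refl by blast

lemma hclass_sub: "hclass X x0 \<alpha> \<subseteq> Omega X x0"
  unfolding hclass_def by blast

lemma hclass_hom:
  fixes \<alpha> \<beta> :: "real^'n::finite \<Rightarrow> 'a::metric_space"
  shows "\<beta> \<in> hclass X x0 \<alpha> \<Longrightarrow> homotopic_with_canon (HP x0) cube X \<alpha> \<beta>"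
  unfolding hclass_def by blast

lemma hclass_eq:
  fixes \<alpha> \<beta> :: "real^'n::finite \<Rightarrow> 'a::metric_space"
  assumes h: "homotopic_with_canon (HP x0) cube X \<alpha> \<beta>"
  shows "hclass X x0 \<alpha> = hclass X x0 \<beta>"
proof (intro set_eqI iffI)
  fix \<gamma> assume "\<gamma> \<in> hclass X x0 \<alpha>"
  then have "\<gamma> \<in> Omega X x0" "homotopic_with_canon (HP x0) cube X \<alpha> \<gamma>" by (auto simp: hclass_def)
  then show "\<gamma> \<in> hclass X x0 \<beta>" using hom_trans[OF hom_sym[OF h]] by (simp add: hclass_def)
next
  fix \<gamma> assume "\<gamma> \<in> hclass X x0 \<beta>"
  then have "\<gamma> \<in> Omega X x0" "homotopic_with_canon (HP x0) cube X \<beta> \<gamma>" by (auto simp: hclass_def)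
  then show "\<gamma> \<in> hclass X x0 \<alpha>" using hom_trans[OF h] by (simp add: hclass_def)
qed

lemma hclass_pin: "\<alpha> \<in> Omega X x0 \<Longrightarrow> hclass X x0 \<alpha> \<in> pin X x0"
  unfolding pin_def by blast

lemma pin_mem_eq:
  fixes a :: "(real^'n::finite \<Rightarrow> 'a::metric_space) set"
  assumes a: "a \<in> pin X x0" and al: "\<alpha> \<in> a"
  shows "a = hclass X x0 \<alpha>"
proof -
  obtain \<alpha>0 where "\<alpha>0 \<in> Omega X x0" and a0: "a = hclass X x0 \<alpha>0" using a unfolding pin_def by blast
  then have "homotopic_with_canon (HP x0) cube X \<alpha>0 \<alpha>" using al hclass_hom by blast
  then show ?thesis using a0 hclass_eq by blast
qed

lemma pin_sub:
  fixes a :: "(real^'n::finite \<Rightarrow> 'a::metric_space) set"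
  shows "a \<in> pin X x0 \<Longrightarrow> a \<subseteq> Omega X x0"
  unfolding pin_def using hclass_sub by blast

lemma pin_ne:
  fixes a :: "(real^'n::finite \<Rightarrow> 'a::metric_space) set"
  shows "a \<in> pin X x0 \<Longrightarrow> a \<noteq> {}"
  unfolding pin_def using hclass_mem by blast

lemma pin_hom:
  fixes a :: "(real^'n::finite \<Rightarrow> 'a::metric_space) set"
  assumes "a \<in> pin X x0" "\<alpha> \<in> a" "\<beta> \<in> a"
  shows "homotopic_with_canon (HP x0) cube X \<alpha> \<beta>"
  using pin_mem_eq[OF assms(1,2)] assms(3) hclass_hom by blast

lemma rho_le:
  fixes a b :: "(real^'n::finite \<Rightarrow> 'a::metric_space) set"
  assumes "a \<subseteq> Omega X x0" "b \<subseteq> Omega X x0" "\<alpha> \<in> a" "\<beta> \<in> b"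
  shows "rho a b \<le> mu \<alpha> \<beta>"
proof -
  have "bdd_below ((\<lambda>p. mu (fst p) (snd p)) ` (a \<times> b))"
  proof (rule bdd_belowI2[of _ 0])
    fix p assume "p \<in> a \<times> b"
    then have "fst p \<in> Omega X x0" "snd p \<in> Omega X x0" using assms by auto
    then show "0 \<le> mu (fst p) (snd p)" using mu_nonneg Omega_cont by blast
  qed
  from cINF_lower[OF this, of "(\<alpha>, \<beta>)"] show ?thesis using assms unfolding rho_def by auto
qed

lemma rho_lt:
  fixes a b :: "(real^'n::finite \<Rightarrow> 'a::metric_space) set"
  assumes "a \<noteq> {}" "b \<noteq> {}" "rho a b < e"
  shows "\<exists>\<alpha>\<in>a. \<exists>\<beta>\<in>b. mu \<alpha> \<beta> < e"
proof -
  have "(\<lambda>p. mu (fst p) (snd p)) ` (a \<times> b) \<noteq> {}" using assms by auto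
  from cInf_lessD[OF this] assms(3) obtain x where "x \<in> (\<lambda>p. mu (fst p) (snd p)) ` (a \<times> b)" "x < e"
    unfolding rho_def by blast
  then obtain p where p: "p \<in> a \<times> b" "mu (fst p) (snd p) < e" by blast
  have "fst p \<in> a" "snd p \<in> b" using p(1) by (auto simp: mem_Times_iff)
  then show ?thesis using p(2) by blast
qed

lemma rho_self:
  fixes a :: "(real^'n::finite \<Rightarrow> 'a::metric_space) set"
  assumes "a \<in> pin X x0"
  shows "rho a a \<le> 0"
proof -
  obtain \<alpha> where "\<alpha> \<in> a" using pin_ne[OF assms] by blast
  then have "rho a a \<le> mu \<alpha> \<alpha>" using rho_le pin_sub[OF assms] by blast
  then show ?thesis using mu_self[of \<alpha>] by linarith
qed

lemma rho_tri:
  fixes a b c :: "(real^'n::finite \<Rightarrow> 'a::metric_space) set"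
  assumes a: "a \<in> pin X x0" and b: "b \<in> pin X x0" and c: "c \<in> pin X x0"
  shows "rho a c \<le> rho a b + rho b c"
proof (rule field_le_epsilon)
  fix \<epsilon> :: real assume e: "0 < \<epsilon>"
  have "rho a b < rho a b + \<epsilon>/2" using e by simp
  then obtain \<alpha> \<beta> where al: "\<alpha> \<in> a" and be: "\<beta> \<in> b" and m1: "mu \<alpha> \<beta> < rho a b + \<epsilon>/2"
    using rho_lt[OF pin_ne[OF a] pin_ne[OF b]] by blast
  have "rho b c < rho b c + \<epsilon>/2" using e by simp
  then obtain \<beta>' \<gamma> where be': "\<beta>' \<in> b" and ga: "\<gamma> \<in> c" and m2: "mu \<beta>' \<gamma> < rho b c + \<epsilon>/2"
    using rho_lt[OF pin_ne[OF b] pin_ne[OF c]] by blast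
  have hb: "homotopic_with_canon (HP x0) cube X \<beta> \<beta>'" by (rule pin_hom[OF b be be'])
  have O: "\<alpha> \<in> Omega X x0" "\<beta> \<in> Omega X x0" "\<beta>' \<in> Omega X x0" "\<gamma> \<in> Omega X x0"
    using pin_sub a b c al be be' ga by blast+
  obtain P Q where hP: "homotopic_with_canon (HP x0) cube X \<alpha> P" and hQ: "homotopic_with_canon (HP x0) cube X \<gamma> Q"
    and m: "mu P Q \<le> mu \<alpha> \<beta> + mu \<beta>' \<gamma>"
    using key[OF O hb] by blast
  have "P \<in> hclass X x0 \<alpha>" using hP hom_Omega(2)[OF hP] by (simp add: hclass_def)
  then have Pa: "P \<in> a" using pin_mem_eq[OF a al] by simp
  have "Q \<in> hclass X x0 \<gamma>" using hQ hom_Omega(2)[OF hQ] by (simp add: hclass_def)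
  then have Qc: "Q \<in> c" using pin_mem_eq[OF c ga] by simp
  have "rho a c \<le> mu P Q" by (rule rho_le[OF pin_sub[OF a] pin_sub[OF c] Pa Qc])
  then show "rho a c \<le> rho a b + rho b c + \<epsilon>" using m m1 m2 by linarith
qed

lemma mtop_istop: "istopology (\<lambda>U. U \<subseteq> C \<and> (\<forall>a\<in>U. \<exists>e>0. \<forall>b\<in>C. D a b < (e::real) \<longrightarrow> b \<in> U))"
  unfolding istopology_def
proof (rule conjI; intro allI impI)
  fix S T
  assume S: "S \<subseteq> C \<and> (\<forall>a\<in>S. \<exists>e>0. \<forall>b\<in>C. D a b < e \<longrightarrow> b \<in> S)"
    and T: "T \<subseteq> C \<and> (\<forall>a\<in>T. \<exists>e>0. \<forall>b\<in>C. D a b < e \<longrightarrow> b \<in> T)"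
  show "S \<inter> T \<subseteq> C \<and> (\<forall>a\<in>S \<inter> T. \<exists>e>0. \<forall>b\<in>C. D a b < e \<longrightarrow> b \<in> S \<inter> T)"
  proof (intro conjI ballI)
    show "S \<inter> T \<subseteq> C" using S by auto
    fix a assume "a \<in> S \<inter> T"
    then obtain e1 e2 where e1: "e1 > 0" "\<forall>b\<in>C. D a b < e1 \<longrightarrow> b \<in> S"
      and e2: "e2 > 0" "\<forall>b\<in>C. D a b < e2 \<longrightarrow> b \<in> T" using S T by blast
    show "\<exists>e>0. \<forall>b\<in>C. D a b < e \<longrightarrow> b \<in> S \<inter> T"
      by (rule exI[of _ "min e1 e2"]) (use e1 e2 in auto)
  qed
next
  fix K assume K: "\<forall>U\<in>K. U \<subseteq> C \<and> (\<forall>a\<in>U. \<exists>e>0. \<forall>b\<in>C. D a b < e \<longrightarrow> b \<in> U)"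
  show "\<Union>K \<subseteq> C \<and> (\<forall>a\<in>\<Union>K. \<exists>e>0. \<forall>b\<in>C. D a b < e \<longrightarrow> b \<in> \<Union>K)"
  proof (intro conjI ballI)
    show "\<Union>K \<subseteq> C" using K by auto
    fix a assume "a \<in> \<Union>K"
    then obtain U where U: "U \<in> K" "a \<in> U" by auto
    with K obtain e where "e > 0" "\<forall>b\<in>C. D a b < e \<longrightarrow> b \<in> U" by blast
    then show "\<exists>e>0. \<forall>b\<in>C. D a b < e \<longrightarrow> b \<in> \<Union>K" using U by blast
  qed
qed

lemma topspace_mtop:
  "topspace (topology (\<lambda>U. U \<subseteq> C \<and> (\<forall>a\<in>U. \<exists>e>0. \<forall>b\<in>C. D a b < (e::real) \<longrightarrow> b \<in> U))) = C"
  (is "topspace (topology ?P) = C")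
proof -
  have o: "openin (topology ?P) = ?P" by (rule topology_inverse'[OF mtop_istop])
  have "?P C" by (auto intro!: exI[of _ "1::real"])
  then have "C \<subseteq> topspace (topology ?P)" using openin_subset[of "topology ?P" C] o by simp
  moreover have "?P (topspace (topology ?P))" using openin_topspace[of "topology ?P"] o by simp
  ultimately show ?thesis by blast
qed

lemma open_Omega_top:
  "openin (Omega_top X x0) U \<longleftrightarrow> U \<subseteq> Omega X x0 \<and> (\<forall>\<alpha>\<in>U. \<exists>e>0. \<forall>\<beta>\<in>Omega X x0. mu \<alpha> \<beta> < e \<longrightarrow> \<beta> \<in> U)"
  unfolding Omega_top_def by (subst topology_inverse'[OF mtop_istop]) (rule refl)

lemma topspace_Omega_top: "topspace (Omega_top X x0) = Omega X x0"
  unfolding Omega_top_def by (rule topspace_mtop)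

lemma open_rho_top:
  "openin (rho_top X x0) U \<longleftrightarrow> U \<subseteq> pin X x0 \<and> (\<forall>a\<in>U. \<exists>e>0. \<forall>b\<in>pin X x0. rho a b < e \<longrightarrow> b \<in> U)"
  unfolding rho_top_def by (subst topology_inverse'[OF mtop_istop]) (rule refl)

lemma topspace_rho_top: "topspace (rho_top X x0) = pin X x0"
  unfolding rho_top_def by (rule topspace_mtop)

lemma rho_ball_open:
  fixes a :: "(real^'n::finite \<Rightarrow> 'a::metric_space) set"
  assumes a: "a \<in> pin X x0"
  shows "openin (rho_top X x0) {b \<in> pin X x0. rho a b < e}"
  unfolding open_rho_top
proof (intro conjI ballI)
  show "{b \<in> pin X x0. rho a b < e} \<subseteq> pin X x0" by blast
  fix b assume b: "b \<in> {b \<in> pin X x0. rho a b < e}"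
  show "\<exists>d>0. \<forall>c\<in>pin X x0. rho b c < d \<longrightarrow> c \<in> {b \<in> pin X x0. rho a b < e}"
  proof (intro exI conjI ballI impI)
    show "0 < e - rho a b" using b by simp
    fix c assume c: "c \<in> pin X x0" "rho b c < e - rho a b"
    have "rho a c \<le> rho a b + rho b c" using rho_tri[OF a _ c(1)] b by blast
    then show "c \<in> {b \<in> pin X x0. rho a b < e}" using c by simp
  qed
qed


lemma pin_some:
  fixes a :: "(real^'n::finite \<Rightarrow> 'a::metric_space) set"
  shows "a \<in> pin X x0 \<Longrightarrow> (SOME \<alpha>. \<alpha> \<in> a) \<in> a"
  using pin_ne some_in_eq by blast

lemma pin_mult_rep:
  fixes a b :: "(real^'n::finite \<Rightarrow> 'a::metric_space) set"
  assumes a: "a \<in> pin X x0" and b: "b \<in> pin X x0" and al: "\<alpha> \<in> a" and be: "\<beta> \<in> b"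
  shows "pin_mult X x0 a b = hclass X x0 (cat \<alpha> \<beta>)"
proof -
  have "homotopic_with_canon (HP x0) cube X (cat \<alpha> \<beta>) (cat (SOME \<alpha>. \<alpha> \<in> a) (SOME \<beta>. \<beta> \<in> b))"
    by (rule cat_hom_resp[OF pin_hom[OF a al pin_some[OF a]] pin_hom[OF b be pin_some[OF b]]])
  then show ?thesis unfolding pin_mult_def concat_cat by (simp add: hclass_eq)
qed

lemma pin_inv_rep:
  fixes a :: "(real^'n::finite \<Rightarrow> 'a::metric_space) set"
  assumes a: "a \<in> pin X x0" and al: "\<alpha> \<in> a"
  shows "pin_inv X x0 a = hclass X x0 (lrev \<alpha>)"
proof -
  have "homotopic_with_canon (HP x0) cube X (lrev \<alpha>) (lrev (SOME \<alpha>. \<alpha> \<in> a))"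
    by (rule rev_hom_resp[OF pin_hom[OF a al pin_some[OF a]]])
  then show ?thesis unfolding pin_inv_def reverse_rev by (simp add: hclass_eq)
qed

lemma group_top:
  fixes X :: "'a::metric_space set"
  shows "group_topology_pin X x0 (rho_top X x0 :: (real^'n::finite \<Rightarrow> 'a) set topology)"
  unfolding group_topology_pin_def
proof (intro conjI)
  show "topspace (rho_top X x0 :: (real^'n \<Rightarrow> 'a) set topology) = pin X x0"
    by (rule topspace_rho_top)
  show "continuous_map (prod_topology (rho_top X x0) (rho_top X x0)) (rho_top X x0 :: (real^'n \<Rightarrow> 'a) set topology)
     (\<lambda>(a, b). pin_mult X x0 a b)"
    unfolding continuous_map
  proof (intro conjI allI impI)
    show "(\<lambda>(a, b). pin_mult X x0 a b) ` topspace (prod_topology (rho_top X x0) (rho_top X x0))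
        \<subseteq> topspace (rho_top X x0 :: (real^'n \<Rightarrow> 'a) set topology)"
    proof clarsimp
      fix a b :: "(real^'n \<Rightarrow> 'a) set"
      assume ab: "a \<in> topspace (rho_top X x0)" "b \<in> topspace (rho_top X x0)"
      then have a: "a \<in> pin X x0" and b: "b \<in> pin X x0" by (simp_all add: topspace_rho_top)
      obtain \<alpha> \<beta> where "\<alpha> \<in> a" "\<beta> \<in> b" using pin_ne[OF a] pin_ne[OF b] by blast
      then show "pin_mult X x0 a b \<in> topspace (rho_top X x0)"
        using pin_mult_rep[OF a b] cat_Omega hclass_pin pin_sub[OF a] pin_sub[OF b]
        by (simp add: topspace_rho_top) blast
    qed
  next
    fix U :: "(real^'n \<Rightarrow> 'a) set set"
    assume U: "openin (rho_top X x0) U"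
    show "openin (prod_topology (rho_top X x0) (rho_top X x0))
          {x \<in> topspace (prod_topology (rho_top X x0) (rho_top X x0)). (case x of (a, b) \<Rightarrow> pin_mult X x0 a b) \<in> U}"
    proof (subst openin_subopen, intro ballI)
      fix p assume p: "p \<in> {x \<in> topspace (prod_topology (rho_top X x0) (rho_top X x0)). (case x of (a, b) \<Rightarrow> pin_mult X x0 a b) \<in> U}"
      obtain a b where pab: "p = (a, b)" by (cases p)
      have a: "a \<in> pin X x0" and b: "b \<in> pin X x0" and abU: "pin_mult X x0 a b \<in> U"
        using p pab by (auto simp: topspace_rho_top)
      obtain e where e: "e > 0" "\<forall>c\<in>pin X x0. rho (pin_mult X x0 a b) c < e \<longrightarrow> c \<in> U"
        using U abU unfolding open_rho_top by blast
      define V where "V = {a' \<in> pin X x0. rho a a' < e}"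
      define W where "W = {b' \<in> pin X x0. rho b b' < e}"
      show "\<exists>T. openin (prod_topology (rho_top X x0) (rho_top X x0)) T \<and> p \<in> T \<and>
          T \<subseteq> {x \<in> topspace (prod_topology (rho_top X x0) (rho_top X x0)). (case x of (a, b) \<Rightarrow> pin_mult X x0 a b) \<in> U}"
      proof (intro exI conjI)
        show "openin (prod_topology (rho_top X x0) (rho_top X x0)) (V \<times> W)"
          unfolding V_def W_def using rho_ball_open[OF a] rho_ball_open[OF b]
          by (simp add: openin_prod_Times_iff)
        show "p \<in> V \<times> W" using pab a b rho_self[OF a] rho_self[OF b] e(1) by (simp add: V_def W_def)
        show "V \<times> W \<subseteq> {x \<in> topspace (prod_topology (rho_top X x0) (rho_top X x0)). (case x of (a, b) \<Rightarrow> pin_mult X x0 a b) \<in> U}"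
        proof (rule subsetI)
          fix q assume q: "q \<in> V \<times> W"
          obtain a' b' where qab: "q = (a', b')" by (cases q)
          have a': "a' \<in> V" and b': "b' \<in> W" using q qab by auto
          have a'p: "a' \<in> pin X x0" and ra: "rho a a' < e" using a' by (auto simp: V_def)
          have b'p: "b' \<in> pin X x0" and rb: "rho b b' < e" using b' by (auto simp: W_def)
          obtain \<alpha> \<alpha>' where al: "\<alpha> \<in> a" "\<alpha>' \<in> a'" "mu \<alpha> \<alpha>' < e"
            using rho_lt[OF pin_ne[OF a] pin_ne[OF a'p] ra] by blast
          obtain \<beta> \<beta>' where be: "\<beta> \<in> b" "\<beta>' \<in> b'" "mu \<beta> \<beta>' < e"
            using rho_lt[OF pin_ne[OF b] pin_ne[OF b'p] rb] by blast
          have O: "\<alpha> \<in> Omega X x0" "\<alpha>' \<in> Omega X x0" "\<beta> \<in> Omega X x0" "\<beta>' \<in> Omega X x0"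
            using al be pin_sub a b a'p b'p by blast+
          have e1: "pin_mult X x0 a b = hclass X x0 (cat \<alpha> \<beta>)" by (rule pin_mult_rep[OF a b al(1) be(1)])
          have e2: "pin_mult X x0 a' b' = hclass X x0 (cat \<alpha>' \<beta>')" by (rule pin_mult_rep[OF a'p b'p al(2) be(2)])
          have c1: "cat \<alpha> \<beta> \<in> Omega X x0" "cat \<alpha>' \<beta>' \<in> Omega X x0" using cat_Omega O by blast+
          have "rho (pin_mult X x0 a b) (pin_mult X x0 a' b') \<le> mu (cat \<alpha> \<beta>) (cat \<alpha>' \<beta>')"
            unfolding e1 e2 by (rule rho_le[OF hclass_sub hclass_sub hclass_mem[OF c1(1)] hclass_mem[OF c1(2)]])
          also have "\<dots> \<le> max (mu \<alpha> \<alpha>') (mu \<beta> \<beta>')" by (rule mu_cat[OF O(1,3,2,4)])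
          also have "\<dots> < e" using al(3) be(3) by simp
          finally have "rho (pin_mult X x0 a b) (pin_mult X x0 a' b') < e" .
          moreover have "pin_mult X x0 a' b' \<in> pin X x0" using e2 hclass_pin c1(2) by simp
          ultimately have "pin_mult X x0 a' b' \<in> U" using e(2) by blast
          then show "q \<in> {x \<in> topspace (prod_topology (rho_top X x0) (rho_top X x0)). (case x of (a, b) \<Rightarrow> pin_mult X x0 a b) \<in> U}"
            using a'p b'p by (simp add: topspace_rho_top qab)
        qed
      qed
    qed
  qed
  show "continuous_map (rho_top X x0) (rho_top X x0 :: (real^'n \<Rightarrow> 'a) set topology) (pin_inv X x0)"
    unfolding continuous_map
  proof (intro conjI allI impI)
    show "pin_inv X x0 ` topspace (rho_top X x0) \<subseteq> topspace (rho_top X x0 :: (real^'n \<Rightarrow> 'a) set topology)"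
    proof clarsimp
      fix a :: "(real^'n \<Rightarrow> 'a) set"
      assume "a \<in> topspace (rho_top X x0)"
      then have a: "a \<in> pin X x0" by (simp add: topspace_rho_top)
      obtain \<alpha> where "\<alpha> \<in> a" using pin_ne[OF a] by blast
      then show "pin_inv X x0 a \<in> topspace (rho_top X x0)"
        using pin_inv_rep[OF a] rev_Omega hclass_pin pin_sub[OF a]
        by (simp add: topspace_rho_top) blast
    qed
  next
    fix U :: "(real^'n \<Rightarrow> 'a) set set"
    assume U: "openin (rho_top X x0) U"
    show "openin (rho_top X x0) {x \<in> topspace (rho_top X x0). pin_inv X x0 x \<in> U}"
    proof (subst openin_subopen, intro ballI)
      fix a assume p: "a \<in> {x \<in> topspace (rho_top X x0). pin_inv X x0 x \<in> U}"
      have a: "a \<in> pin X x0" and aU: "pin_inv X x0 a \<in> U"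
        using p by (auto simp: topspace_rho_top)
      obtain e where e: "e > 0" "\<forall>c\<in>pin X x0. rho (pin_inv X x0 a) c < e \<longrightarrow> c \<in> U"
        using U aU unfolding open_rho_top by blast
      define V where "V = {a' \<in> pin X x0. rho a a' < e}"
      show "\<exists>T. openin (rho_top X x0) T \<and> a \<in> T \<and> T \<subseteq> {x \<in> topspace (rho_top X x0). pin_inv X x0 x \<in> U}"
      proof (intro exI conjI)
        show "openin (rho_top X x0) V" unfolding V_def by (rule rho_ball_open[OF a])
        show "a \<in> V" using a rho_self[OF a] e(1) by (simp add: V_def)
        show "V \<subseteq> {x \<in> topspace (rho_top X x0). pin_inv X x0 x \<in> U}"
        proof (rule subsetI)
          fix a' assume a': "a' \<in> V"
          have a'p: "a' \<in> pin X x0" and ra: "rho a a' < e" using a' by (auto simp: V_def)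
          obtain \<alpha> \<alpha>' where al: "\<alpha> \<in> a" "\<alpha>' \<in> a'" "mu \<alpha> \<alpha>' < e"
            using rho_lt[OF pin_ne[OF a] pin_ne[OF a'p] ra] by blast
          have O: "\<alpha> \<in> Omega X x0" "\<alpha>' \<in> Omega X x0" using al pin_sub a a'p by blast+
          have e1: "pin_inv X x0 a = hclass X x0 (lrev \<alpha>)" by (rule pin_inv_rep[OF a al(1)])
          have e2: "pin_inv X x0 a' = hclass X x0 (lrev \<alpha>')" by (rule pin_inv_rep[OF a'p al(2)])
          have c1: "lrev \<alpha> \<in> Omega X x0" "lrev \<alpha>' \<in> Omega X x0" using rev_Omega O by blast+
          have "rho (pin_inv X x0 a) (pin_inv X x0 a') \<le> mu (lrev \<alpha>) (lrev \<alpha>')"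
            unfolding e1 e2 by (rule rho_le[OF hclass_sub hclass_sub hclass_mem[OF c1(1)] hclass_mem[OF c1(2)]])
          also have "\<dots> \<le> mu \<alpha> \<alpha>'" by (rule mu_rev[OF O])
          also have "\<dots> < e" using al(3) by simp
          finally have "rho (pin_inv X x0 a) (pin_inv X x0 a') < e" .
          moreover have "pin_inv X x0 a' \<in> pin X x0" using e2 hclass_pin c1(2) by simp
          ultimately have "pin_inv X x0 a' \<in> U" using e(2) by blast
          then show "a' \<in> {x \<in> topspace (rho_top X x0). pin_inv X x0 x \<in> U}"
            using a'p by (simp add: topspace_rho_top)
        qed
      qed
    qed
  qed
qed

lemma hclass_cont:
  fixes X :: "'a::metric_space set"
  shows "continuous_map (Omega_top X x0 :: (real^'n::finite \<Rightarrow> 'a) topology) (rho_top X x0) (hclass X x0)"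
  unfolding continuous_map
proof (intro conjI allI impI)
  show "hclass X x0 ` topspace (Omega_top X x0 :: (real^'n \<Rightarrow> 'a) topology) \<subseteq> topspace (rho_top X x0)"
    by (auto simp: topspace_Omega_top topspace_rho_top pin_def)
  fix U :: "(real^'n \<Rightarrow> 'a) set set"
  assume U: "openin (rho_top X x0) U"
  show "openin (Omega_top X x0) {x \<in> topspace (Omega_top X x0). hclass X x0 x \<in> U}"
    unfolding open_Omega_top topspace_Omega_top
  proof (intro conjI ballI)
    show "{x \<in> Omega X x0. hclass X x0 x \<in> U} \<subseteq> Omega X x0" by blast
    fix \<alpha> assume al: "\<alpha> \<in> {x \<in> Omega X x0. hclass X x0 x \<in> U}"
    then obtain e where e: "e > 0" "\<forall>c\<in>pin X x0. rho (hclass X x0 \<alpha>) c < e \<longrightarrow> c \<in> U"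
      using U unfolding open_rho_top by blast
    show "\<exists>e>0. \<forall>\<beta>\<in>Omega X x0. mu \<alpha> \<beta> < e \<longrightarrow> \<beta> \<in> {x \<in> Omega X x0. hclass X x0 x \<in> U}"
    proof (intro exI conjI ballI impI)
      show "0 < e" by (rule e(1))
      fix \<beta> assume be: "\<beta> \<in> Omega X x0" "mu \<alpha> \<beta> < e"
      have "rho (hclass X x0 \<alpha>) (hclass X x0 \<beta>) \<le> mu \<alpha> \<beta>"
        using al be by (intro rho_le[OF hclass_sub hclass_sub hclass_mem hclass_mem]) auto
      then have "hclass X x0 \<beta> \<in> U" using e(2) be hclass_pin by force
      then show "\<beta> \<in> {x \<in> Omega X x0. hclass X x0 x \<in> U}" using be by blast
    qed
  qed
qed

lemma quot_istop:
  fixes X :: "'a::metric_space set"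
  shows "istopology (\<lambda>U. U \<subseteq> pin X x0 \<and>
      openin (Omega_top X x0 :: (real^'n::finite \<Rightarrow> 'a) topology) {\<alpha> \<in> Omega X x0. hclass X x0 \<alpha> \<in> U})"
  unfolding istopology_def
proof (rule conjI; intro allI impI)
  fix S T :: "(real^'n \<Rightarrow> 'a) set set"
  assume S: "S \<subseteq> pin X x0 \<and> openin (Omega_top X x0) {\<alpha> \<in> Omega X x0. hclass X x0 \<alpha> \<in> S}"
    and T: "T \<subseteq> pin X x0 \<and> openin (Omega_top X x0) {\<alpha> \<in> Omega X x0. hclass X x0 \<alpha> \<in> T}"
  have "{\<alpha> \<in> Omega X x0. hclass X x0 \<alpha> \<in> S \<inter> T} =
      {\<alpha> \<in> Omega X x0. hclass X x0 \<alpha> \<in> S} \<inter> {\<alpha> \<in> Omega X x0. hclass X x0 \<alpha> \<in> T}" by blast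
  then show "S \<inter> T \<subseteq> pin X x0 \<and> openin (Omega_top X x0) {\<alpha> \<in> Omega X x0. hclass X x0 \<alpha> \<in> S \<inter> T}"
    using S T by auto
next
  fix K :: "(real^'n \<Rightarrow> 'a) set set set"
  assume K: "\<forall>U\<in>K. U \<subseteq> pin X x0 \<and> openin (Omega_top X x0) {\<alpha> \<in> Omega X x0. hclass X x0 \<alpha> \<in> U}"
  have "{\<alpha> \<in> Omega X x0. hclass X x0 \<alpha> \<in> \<Union>K} = \<Union>((\<lambda>U. {\<alpha> \<in> Omega X x0. hclass X x0 \<alpha> \<in> U}) ` K)" by blast
  moreover have "openin (Omega_top X x0) (\<Union>((\<lambda>U. {\<alpha> \<in> Omega X x0. hclass X x0 \<alpha> \<in> U}) ` K))"
    using K by (intro openin_Union) blast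
  ultimately show "\<Union>K \<subseteq> pin X x0 \<and> openin (Omega_top X x0) {\<alpha> \<in> Omega X x0. hclass X x0 \<alpha> \<in> \<Union>K}"
    using K by auto
qed

theorem proposition4p13:
  fixes X :: "'a::metric_space set" and x0 :: 'a
  assumes "path_connected X" and "x0 \<in> X"
  shows "continuous_map (Omega_top X x0 :: (real^'n::finite \<Rightarrow> 'a) topology) (rho_top X x0) (hclass X x0)
     \<and> (\<forall>U. openin (rho_top X x0 :: (real^'n \<Rightarrow> 'a) set topology) U \<longrightarrow> openin (quot_top X x0) U)
     \<and> (\<forall>U. openin (rho_top X x0 :: (real^'n \<Rightarrow> 'a) set topology) U \<longrightarrow> openin (tau_top X x0) U)"
proof (intro conjI allI impI)
  show c: "continuous_map (Omega_top X x0 :: (real^'n::finite \<Rightarrow> 'a) topology) (rho_top X x0) (hclass X x0)"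
    by (rule hclass_cont)
  fix U :: "(real^'n \<Rightarrow> 'a) set set"
  assume U: "openin (rho_top X x0) U"
  have "U \<subseteq> pin X x0" using U unfolding open_rho_top by blast
  moreover have "openin (Omega_top X x0 :: (real^'n::finite \<Rightarrow> 'a) topology) {\<alpha> \<in> Omega X x0. hclass X x0 \<alpha> \<in> U}"
    using c U unfolding continuous_map_def topspace_Omega_top by blast
  ultimately show "openin (quot_top X x0) U"
    unfolding quot_top_def by (subst topology_inverse'[OF quot_istop]) blast
next
  fix U :: "(real^'n \<Rightarrow> 'a) set set"
  assume U: "openin (rho_top X x0) U"
  have "U \<in> \<Union>{{U. openin T U} | T. group_topology_pin X x0 T \<and>
          continuous_map (Omega_top X x0 :: (real^'n \<Rightarrow> 'a) topology) T (hclass X x0)}"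
    using U group_top hclass_cont by blast
  then show "openin (tau_top X x0) U"
    unfolding tau_top_def by (rule topology_generated_by_Basis)
qed

end
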